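(* Consider the following downlink cell-free system. There are $M$ access points (APs), each with $N$ antennas, and $K$ single-antenna user equipments (UEs). For each UE $k\in[K]$ let $\mathcal{A}_k\subset[M]$ be its AP cluster, and for each AP $m\in[M]$ let $\mathcal{U}_m=\{k\in[K]: m\in\mathcal{A}_k\}$ be its UE group. The channel from AP $m$ to UE $k$ is $$\mathbf{h}_{m,k}=\sqrt{\beta_{m,k}N}\sum_{l=1}^{L}\sqrt{\kappa_{m,k,l}}\,g_{m,k,l}\,\mathbf{a}(\theta_{m,k,l}),$$ where $\beta_{m,k}\ge 0$, $\kappa_{m,k,l}\in[0,1]$ with $\sum_{l=1}^L\kappa_{m,k,l}=1$, the angles $\theta_{m,k,l}$ are fixed (deterministic), $\mathbf{a}(\theta)=\tfrac{1}{\sqrt N}[1,e^{j\pi\sin\theta},\dots,e^{j(N-1)\pi\sin\theta}]^T$, and the path gains $g_{m,k,l}\sim\mathcal{CN}(0,1)$ are mutually independent over all $(m,k,l)$. Each UE $k$ reports to each AP $m\in\mathcal{A}_k$ quantized path gains $\hat g_{m,k,l}=g_{m,k,l}-\Delta_{m,k,l}$ with $b_{m,k,l}\ge 0$ bits, where the quantization errors satisfy $\Delta_{m,k,l}\sim\mathcal{CN}(0,2^{-b_{m,k,l}})$ and are independent across paths and across $(m,k)$; AP $m$ forms $\hat{\mathbf{h}}_{m,k}=\sqrt{\beta_{m,k}N}\sum_{l}\sqrt{\kappa_{m,k,l}}\hat g_{m,k,l}\mathbf{a}(\theta_{m,k,l})$ and the error $\mathbf{e}_{m,k}=\mathbf{h}_{m,k}-\hat{\mathbf{h}}_{m,k}$.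 AP $m$ transmits $\mathbf{x}_m=\sum_{j\in\mathcal{U}_m}\sqrt{p_m}\,\mathbf{w}_{m,j}s_j$ with equal power $p_m=P_m/|\mathcal{U}_m|$, unit-norm zero-forcing beamformers $\mathbf{w}_{m,j}$ with $\mathbf{w}_{m,j}\perp\{\hat{\mathbf{h}}_{m,i}: i\in\mathcal{U}_m\setminus\{j\}\}$, each $\mathbf{w}_{m,j}$ being a function only of the quantized channels $\{\hat{\mathbf{h}}_{m,i}: i\in\mathcal{U}_m\setminus\{j\}\}$, and unit-power data symbols $s_j$. Define $$\mathcal{D}_k=\Big|\sum_{m\in\mathcal{A}_k}\sqrt{p_m}\,\mathbf{h}_{m,k}^\dagger\mathbf{w}_{m,k}\Big|^2,\quad \mathcal{I}^{\mathsf{SGI}}_k=\sum_{j\in[K]\setminus\{k\}}\Big|\sum_{m\in\mathcal{A}_j\cap\mathcal{A}_k}\sqrt{p_m}\,\mathbf{h}_{m,k}^\dagger\mathbf{w}_{m,j}\Big|^2,$$ $$\mathcal{I}^{\mathsf{IGI}}_k=\sum_{j\in[K]\setminus\{k\}}\Big|\sum_{m\in\mathcal{A}_j\setminus\mathcal{A}_k}\sqrt{p_m}\,\mathbf{h}_{m,k}^\dagger\mathbf{w}_{m,j}\Big|^2.$$ Then, with $\mathbb{E}_{\mathbf{h},\mathcal{C}}$ denoting expectation over the path gains and the quantization, $$\mathbb{E}_{\mathbf{h},\mathcal{C}}[\mathcal{D}_k]\le\sum_{m\in\mathcal{A}_k}p_m\beta_{m,k}N,$$ $$\mathbb{E}_{\mathbf{h},\mathcal{C}}[\mathcal{I}^{\mathsf{SGI}}_k]\le\sum_{j\in[K],\,j\ne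 k}\ \sum_{m\in\mathcal{A}_j\cap\mathcal{A}_k}p_m\beta_{m,k}N\Big[\sum_{l=1}^{L}\kappa_{m,k,l}2^{-b_{m,k,l}}\Big],$$ $$\mathbb{E}_{\mathbf{h},\mathcal{C}}[\mathcal{I}^{\mathsf{IGI}}_k]\le\sum_{j\in[K],\,j\ne k}\ \sum_{m\in\mathcal{A}_j\setminus\mathcal{A}_k}p_m\beta_{m,k}N.$$
   Context: $[n]=\{1,\dots,n\}$; $\dagger$ denotes conjugate transpose. $\mathcal{D}_k$, $\mathcal{I}^{\mathsf{SGI}}_k$, $\mathcal{I}^{\mathsf{IGI}}_k$ are the desired-signal, same-group-interference and inter-group-interference powers at UE $k$. $P_m$ is AP $m$'s transmit power budget. *)

theory Defs
  imports "HOL-Probability.Probability"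
begin

text \<open>Indices are 0-based: APs m < M, UEs k < K, paths l < L, antennas n < N.
  Vectors in C^N are functions nat => complex (entries n >= N are zero / ignored).\<close>

definition ugroup :: "nat \<Rightarrow> (nat \<Rightarrow> nat set) \<Rightarrow> nat \<Rightarrow> nat set" where
  "ugroup K A m = {k \<in> {..<K}. m \<in> A k}"

definition steer :: "nat \<Rightarrow> real \<Rightarrow> nat \<Rightarrow> complex" where
  "steer N \<theta> n = (if n < N then complex_of_real (1 / sqrt (real N)) * cis (pi * real n * sin \<theta>) else 0)"

definition mpchan :: "nat \<Rightarrow> nat \<Rightarrow> real \<Rightarrow> (nat \<Rightarrow> real) \<Rightarrow> (nat \<Rightarrow> real) \<Rightarrow> (nat \<Rightarrow> complex) \<Rightarrow> nat \<Rightarrow> complex" where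
  "mpchan N L \<beta> \<kappa> \<theta> G n =
     complex_of_real (sqrt (\<beta> * real N)) *
       (\<Sum>l<L. complex_of_real (sqrt (\<kappa> l)) * G l * steer N (\<theta> l) n)"

definition hip :: "nat \<Rightarrow> (nat \<Rightarrow> complex) \<Rightarrow> (nat \<Rightarrow> complex) \<Rightarrow> complex" where
  "hip N x y = (\<Sum>n<N. cnj (x n) * y n)"

definition cgauss :: "'w measure \<Rightarrow> real \<Rightarrow> ('w \<Rightarrow> complex) \<Rightarrow> bool" where
  "cgauss \<Omega> s2 Z \<longleftrightarrow>
     distributed \<Omega> lborel (\<lambda>\<omega>. Re (Z \<omega>)) (normal_density 0 (sqrt (s2 / 2))) \<and>
     distributed \<Omega> lborel (\<lambda>\<omega>. Im (Z \<omega>)) (normal_density 0 (sqrt (s2 / 2))) \<and>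
     prob_space.indep_var \<Omega> borel (\<lambda>\<omega>. Re (Z \<omega>)) borel (\<lambda>\<omega>. Im (Z \<omega>))"

definition sigD :: "nat \<Rightarrow> (nat \<Rightarrow> nat set) \<Rightarrow> (nat \<Rightarrow> real)
    \<Rightarrow> (nat \<Rightarrow> nat \<Rightarrow> 'w \<Rightarrow> nat \<Rightarrow> complex) \<Rightarrow> (nat \<Rightarrow> nat \<Rightarrow> 'w \<Rightarrow> nat \<Rightarrow> complex)
    \<Rightarrow> nat \<Rightarrow> 'w \<Rightarrow> real" where
  "sigD N A p h w k \<omega> =
     (cmod (\<Sum>m\<in>A k. complex_of_real (sqrt (p m)) * hip N (h m k \<omega>) (w m k \<omega>)))\<^sup>2"

definition sigSGI :: "nat \<Rightarrow> nat \<Rightarrow> (nat \<Rightarrow> nat set) \<Rightarrow> (nat \<Rightarrow> real)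
    \<Rightarrow> (nat \<Rightarrow> nat \<Rightarrow> 'w \<Rightarrow> nat \<Rightarrow> complex) \<Rightarrow> (nat \<Rightarrow> nat \<Rightarrow> 'w \<Rightarrow> nat \<Rightarrow> complex)
    \<Rightarrow> nat \<Rightarrow> 'w \<Rightarrow> real" where
  "sigSGI K N A p h w k \<omega> =
     (\<Sum>j\<in>{..<K} - {k}.
        (cmod (\<Sum>m\<in>A j \<inter> A k. complex_of_real (sqrt (p m)) * hip N (h m k \<omega>) (w m j \<omega>)))\<^sup>2)"

definition sigIGI :: "nat \<Rightarrow> nat \<Rightarrow> (nat \<Rightarrow> nat set) \<Rightarrow> (nat \<Rightarrow> real)
    \<Rightarrow> (nat \<Rightarrow> nat \<Rightarrow> 'w \<Rightarrow> nat \<Rightarrow> complex) \<Rightarrow> (nat \<Rightarrow> nat \<Rightarrow> 'w \<Rightarrow> nat \<Rightarrow> complex)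
    \<Rightarrow> nat \<Rightarrow> 'w \<Rightarrow> real" where
  "sigIGI K N A p h w k \<omega> =
     (\<Sum>j\<in>{..<K} - {k}.
        (cmod (\<Sum>m\<in>A j - A k. complex_of_real (sqrt (p m)) * hip N (h m k \<omega>) (w m j \<omega>)))\<^sup>2)"

end

theory Submission
  imports Defs
begin

lemma meas_comp_any[measurable]:
  "(\<lambda>x. x i) \<in> borel_measurable (PiM A (\<lambda>_. (borel :: 'b::topological_space measure)))"
proof (cases "i \<in> A")
  case True then show ?thesis by (rule measurable_component_singleton)
next
  case False
  have "\<And>x. x \<in> space (PiM A (\<lambda>_. (borel :: 'b measure))) \<Longrightarrow> x i = undefined"
    using False by (auto simp: space_PiM PiE_def extensional_def)
  then show ?thesis
    by (subst measurable_cong[where g="\<lambda>_. undefined"]) auto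
qed

lemma cnj_meas[measurable (raw)]:
  "f \<in> borel_measurable M \<Longrightarrow> (\<lambda>x. cnj (f x :: complex)) \<in> borel_measurable M"
  by (simp add: borel_measurable_complex_iff)

context prob_space begin

lemma indep_block:
  fixes Z :: "'i \<Rightarrow> 'a \<Rightarrow> 'b::topological_space"
    and F H :: "('i \<Rightarrow> 'b) \<Rightarrow> 'c::{real_normed_field, banach, second_countable_topology}"
  assumes ind: "indep_vars (\<lambda>_. borel) Z J" and AB: "A \<inter> B = {}" "A \<subseteq> J" "B \<subseteq> J"
    and F: "F \<in> borel_measurable (PiM A (\<lambda>_. borel))" and FA: "\<And>x. F (restrict x A) = F x"
    and H: "H \<in> borel_measurable (PiM B (\<lambda>_. borel))" and HB: "\<And>x. H (restrict x B) = H x"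
    and iF: "integrable M (\<lambda>\<omega>. F (\<lambda>i. Z i \<omega>))" and iH: "integrable M (\<lambda>\<omega>. H (\<lambda>i. Z i \<omega>))"
  shows "(\<integral>\<omega>. F (\<lambda>i. Z i \<omega>) * H (\<lambda>i. Z i \<omega>) \<partial>M) = (\<integral>\<omega>. F (\<lambda>i. Z i \<omega>) \<partial>M) * (\<integral>\<omega>. H (\<lambda>i. Z i \<omega>) \<partial>M)"
    and "integrable M (\<lambda>\<omega>. F (\<lambda>i. Z i \<omega>) * H (\<lambda>i. Z i \<omega>))"
proof -
  have "indep_var borel (F \<circ> (\<lambda>\<omega>. restrict (\<lambda>i. Z i \<omega>) A)) borel (H \<circ> (\<lambda>\<omega>. restrict (\<lambda>i. Z i \<omega>) B))"
    by (rule indep_var_compose[OF indep_var_restrict[OF ind AB] F H])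
  also have "F \<circ> (\<lambda>\<omega>. restrict (\<lambda>i. Z i \<omega>) A) = (\<lambda>\<omega>. F (\<lambda>i. Z i \<omega>))" using FA by (simp add: comp_def)
  also have "H \<circ> (\<lambda>\<omega>. restrict (\<lambda>i. Z i \<omega>) B) = (\<lambda>\<omega>. H (\<lambda>i. Z i \<omega>))" using HB by (simp add: comp_def)
  finally have I: "indep_var borel (\<lambda>\<omega>. F (\<lambda>i. Z i \<omega>)) borel (\<lambda>\<omega>. H (\<lambda>i. Z i \<omega>))" .
  show "(\<integral>\<omega>. F (\<lambda>i. Z i \<omega>) * H (\<lambda>i. Z i \<omega>) \<partial>M) = (\<integral>\<omega>. F (\<lambda>i. Z i \<omega>) \<partial>M) * (\<integral>\<omega>. H (\<lambda>i. Z i \<omega>) \<partial>M)"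
    "integrable M (\<lambda>\<omega>. F (\<lambda>i. Z i \<omega>) * H (\<lambda>i. Z i \<omega>))"
    using indep_var_lebesgue_integral[OF I iF iH] indep_var_integrable[OF I iF iH] by auto
qed

lemma indep_var_const:
  assumes "random_variable borel Y"
  shows "indep_var (borel::'b::topological_space measure) (\<lambda>_. c) (borel :: 'b measure) Y"
proof -
  have "indep_vars (case_bool borel borel) (case_bool (\<lambda>_. c) Y) UNIV"
  proof (subst indep_vars_finite[where E="\<lambda>b. sets (case_bool borel borel b)"])
    show "\<forall>A\<in>\<Pi> i\<in>UNIV. sets (case_bool borel borel i).
        prob (\<Inter>j\<in>UNIV. case_bool (\<lambda>_. c) Y j -` A j \<inter> space M) =
        (\<Prod>j\<in>UNIV. prob (case_bool (\<lambda>_. c) Y j -` A j \<inter> space M))"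
    proof
      fix A assume A: "A \<in> (\<Pi> i\<in>UNIV. sets (case_bool (borel::'b measure) (borel::'b measure) i))"
      show "prob (\<Inter>j\<in>UNIV. case_bool (\<lambda>_. c) Y j -` A j \<inter> space M) =
        (\<Prod>j\<in>UNIV. prob (case_bool (\<lambda>_. c) Y j -` A j \<inter> space M))"
        unfolding UNIV_bool
        by (cases "c \<in> A True") (auto simp: prob_space Int_absorb1 Int_commute)
    qed
  qed (use assms in \<open>auto split: bool.split simp: Int_stable_def sets.sigma_sets_eq[of borel, simplified]\<close>)
  then show ?thesis unfolding indep_var_def .
qed

lemma flatten_pairs:
  fixes X Y :: "'i \<Rightarrow> 'a \<Rightarrow> 'b::second_countable_topology"
  assumes fin: "finite I" and ind: "indep_vars (\<lambda>_. borel) (\<lambda>i \<omega>. (X i \<omega>, Y i \<omega>)) I"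
    and ind2: "\<And>i. i \<in> I \<Longrightarrow> indep_var borel (X i) borel (Y i)"
  shows "indep_vars (\<lambda>_. borel) (\<lambda>(i,b) \<omega>. if b then X i \<omega> else Y i \<omega>) (I \<times> UNIV)"
proof -
  have rvP: "random_variable borel (\<lambda>\<omega>. (X i \<omega>, Y i \<omega>))" if "i \<in> I" for i
    using ind that by (auto simp: indep_vars_def)
  have rvX: "random_variable borel (X i)" if "i \<in> I" for i
    using indep_var_rv1[OF ind2[OF that]] .
  have rvY: "random_variable borel (Y i)" if "i \<in> I" for i
    using indep_var_rv2[OF ind2[OF that]] .
  show ?thesis
  proof (cases "I = {}")
    case True
    then show ?thesis by (simp add: indep_vars_def indep_sets_def)
  next
    case False
    show ?thesis
    proof (subst indep_vars_finite[where E="\<lambda>_. sets borel"])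
      show "I \<times> UNIV \<noteq> {}" "finite (I \<times> (UNIV::bool set))" using False fin by auto
      show "\<And>i. i \<in> I \<times> UNIV \<Longrightarrow> random_variable borel ((\<lambda>(i,b) \<omega>. if b then X i \<omega> else Y i \<omega>) i)"
        using rvX rvY by (auto split: if_splits)
      show "\<forall>A\<in>\<Pi> i\<in>I \<times> UNIV. sets borel.
        prob (\<Inter>j\<in>I \<times> UNIV. (\<lambda>(i,b) \<omega>. if b then X i \<omega> else Y i \<omega>) j -` A j \<inter> space M) =
        (\<Prod>j\<in>I \<times> UNIV. prob ((\<lambda>(i,b) \<omega>. if b then X i \<omega> else Y i \<omega>) j -` A j \<inter> space M))"
      proof
        fix A assume A: "A \<in> (\<Pi> i\<in>I \<times> (UNIV::bool set). sets (borel::'b measure))"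
        have AT: "A (i, b) \<in> sets borel" if "i \<in> I" for i b using A that by auto
        have prodset: "A (i, True) \<times> A (i, False) \<in> sets (borel :: ('b \<times> 'b) measure)" if "i \<in> I" for i
          using AT[OF that] by (simp add: borel_prod[symmetric])
        have "(\<Inter>j\<in>I \<times> UNIV. (\<lambda>(i,b) \<omega>. if b then X i \<omega> else Y i \<omega>) j -` A j \<inter> space M)
          = (\<Inter>i\<in>I. (\<lambda>\<omega>. (X i \<omega>, Y i \<omega>)) -` (A (i, True) \<times> A (i, False)) \<inter> space M)"
          using False by (auto; metis (full_types))
        also have "prob \<dots> = (\<Prod>i\<in>I. prob ((\<lambda>\<omega>. (X i \<omega>, Y i \<omega>)) -` (A (i, True) \<times> A (i, False)) \<inter> space M))"
          by (rule indep_varsD_finite[OF ind False fin prodset])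
        also have "\<dots> = (\<Prod>i\<in>I. prob (X i -` A (i, True) \<inter> space M) * prob (Y i -` A (i, False) \<inter> space M))"
          by (intro prod.cong refl indep_varD[OF ind2] AT)
        also have "\<dots> = (\<Prod>i\<in>I. \<Prod>b\<in>UNIV. prob ((\<lambda>(i,b) \<omega>. if b then X i \<omega> else Y i \<omega>) (i,b) -` A (i,b) \<inter> space M))"
          by (simp add: UNIV_bool mult.commute)
        also have "\<dots> = (\<Prod>j\<in>I \<times> UNIV. prob ((\<lambda>(i,b) \<omega>. if b then X i \<omega> else Y i \<omega>) j -` A j \<inter> space M))"
          using prod.cartesian_product[of "\<lambda>i b. prob ((\<lambda>(i,b) \<omega>. if b then X i \<omega> else Y i \<omega>) (i,b) -` A (i,b) \<inter> space M)" UNIV I]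
          by (simp add: prod.cartesian_product) (intro prod.cong refl; clarsimp)
        finally show "prob (\<Inter>j\<in>I \<times> UNIV. (\<lambda>(i,b) \<omega>. if b then X i \<omega> else Y i \<omega>) j -` A j \<inter> space M) =
          (\<Prod>j\<in>I \<times> UNIV. prob ((\<lambda>(i,b) \<omega>. if b then X i \<omega> else Y i \<omega>) j -` A j \<inter> space M))" .
      qed
    qed (auto simp: Int_stable_def sets.sigma_sets_eq[of borel, simplified])
  qed
qed

lemma normal0_moments:
  assumes s: "0 < \<sigma>" and D: "distributed M lborel X (normal_density 0 \<sigma>)"
  shows "integrable M X" "expectation X = 0" "integrable M (\<lambda>x. (X x)\<^sup>2)"
    "expectation (\<lambda>x. (X x)\<^sup>2) = \<sigma>\<^sup>2"
proof -
  show iX: "integrable M X"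
    using distributed_integrable[OF D, of "\<lambda>x. x"] integrable_normal_moment_nz_1[OF s, of 0] by simp
  show eX: "expectation X = 0" using normal_distributed_expectation[OF s D] .
  show "integrable M (\<lambda>x. (X x)\<^sup>2)"
    using distributed_integrable[OF D, of "\<lambda>x. x^2"] integrable_normal_moment[OF s, of 0 2] by simp
  show "expectation (\<lambda>x. (X x)\<^sup>2) = \<sigma>\<^sup>2"
    using normal_distributed_variance[OF s D] eX by simp
qed

lemma cgauss_moments:
  assumes C: "cgauss M s2 Z" and s: "0 < s2"
  shows "Z \<in> borel_measurable M" "integrable M Z" "(\<integral>\<omega>. Z \<omega> \<partial>M) = 0"
    "integrable M (\<lambda>\<omega>. (cmod (Z \<omega>))\<^sup>2)" "(\<integral>\<omega>. (cmod (Z \<omega>))\<^sup>2 \<partial>M) = s2"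
proof -
  have s': "0 < sqrt (s2 / 2)" using s by simp
  have DR: "distributed M lborel (\<lambda>\<omega>. Re (Z \<omega>)) (normal_density 0 (sqrt (s2 / 2)))"
   and DI: "distributed M lborel (\<lambda>\<omega>. Im (Z \<omega>)) (normal_density 0 (sqrt (s2 / 2)))"
    using C by (auto simp: cgauss_def)
  note R = normal0_moments[OF s' DR] and I = normal0_moments[OF s' DI]
  have mR: "(\<lambda>\<omega>. Re (Z \<omega>)) \<in> borel_measurable M" using distributed_measurable[OF DR] by simp
  have mI: "(\<lambda>\<omega>. Im (Z \<omega>)) \<in> borel_measurable M" using distributed_measurable[OF DI] by simp
  show "Z \<in> borel_measurable M" using mR mI borel_measurable_complex_iff by blast
  have Zeq: "Z = (\<lambda>\<omega>. complex_of_real (Re (Z \<omega>)) + \<i> * complex_of_real (Im (Z \<omega>)))"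
    by (simp add: complex_eq[symmetric])
  show iZ: "integrable M Z"
    by (subst Zeq) (simp add: R(1) I(1))
  show "(\<integral>\<omega>. Z \<omega> \<partial>M) = 0"
  proof -
    have "(\<integral>\<omega>. Z \<omega> \<partial>M) = (\<integral>\<omega>. complex_of_real (Re (Z \<omega>)) + \<i> * complex_of_real (Im (Z \<omega>)) \<partial>M)"
      by (rule arg_cong[OF Zeq])
    also have "\<dots> = 0"
      by (subst Bochner_Integration.integral_add) (simp_all add: R(1) I(1) R(2) I(2))
    finally show ?thesis .
  qed
  have Zn: "(\<lambda>\<omega>. (cmod (Z \<omega>))\<^sup>2) = (\<lambda>\<omega>. (Re (Z \<omega>))\<^sup>2 + (Im (Z \<omega>))\<^sup>2)"
    by (simp add: cmod_power2)
  show "integrable M (\<lambda>\<omega>. (cmod (Z \<omega>))\<^sup>2)" unfolding Zn using R(3) I(3) by simp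
  show "(\<integral>\<omega>. (cmod (Z \<omega>))\<^sup>2 \<partial>M) = s2" unfolding Zn using R(3,4) I(3,4) s by simp
qed

lemma blk_meas:
  fixes Z :: "'i \<Rightarrow> 'a \<Rightarrow> 'b::topological_space" and F :: "('i \<Rightarrow> 'b) \<Rightarrow> 'c::topological_space"
  assumes ind: "indep_vars (\<lambda>_. borel) Z J" and B: "B \<subseteq> J"
    and F: "F \<in> borel_measurable (PiM B (\<lambda>_. borel))" and FB: "\<And>x. F (restrict x B) = F x"
  shows "(\<lambda>\<omega>. F (\<lambda>i. Z i \<omega>)) \<in> borel_measurable M"
proof -
  have "(\<lambda>\<omega>. restrict (\<lambda>i. Z i \<omega>) B) \<in> measurable M (PiM B (\<lambda>_. borel))"
    using ind B by (auto simp: indep_vars_def intro!: measurable_restrict)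
  from measurable_compose[OF this F] show ?thesis using FB by simp
qed

lemma restrict_comp_meas:
  fixes F :: "('i \<Rightarrow> 'b::topological_space) \<Rightarrow> 'c::topological_space"
  assumes "A \<subseteq> B" "F \<in> borel_measurable (PiM A (\<lambda>_. borel))" "\<And>x. F (restrict x A) = F x"
  shows "F \<in> borel_measurable (PiM B (\<lambda>_. borel))"
proof -
  from measurable_compose[OF measurable_restrict_subset[OF assms(1)] assms(2)]
  show ?thesis using assms(3) by simp
qed

lemma bounded_integrable:
  fixes f :: "'a \<Rightarrow> complex"
  assumes "f \<in> borel_measurable M" "\<And>\<omega>. \<omega> \<in> space M \<Longrightarrow> cmod (f \<omega>) \<le> 1"
  shows "integrable M f"
  by (rule integrable_const_bound[where B=1]) (use assms in auto)

declare of_real_power[simp del]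

lemma integral_sum2:
  fixes f :: "'i \<Rightarrow> 'j \<Rightarrow> 'a \<Rightarrow> 'b::{banach, second_countable_topology}"
  assumes "\<And>i j. i \<in> A \<Longrightarrow> j \<in> B \<Longrightarrow> integrable M (f i j)"
  shows "(\<integral>x. (\<Sum>i\<in>A. \<Sum>j\<in>B. f i j x) \<partial>M) = (\<Sum>i\<in>A. \<Sum>j\<in>B. \<integral>x. f i j x \<partial>M)"
  using assms
  by (subst Bochner_Integration.integral_sum)
     (auto intro!: Bochner_Integration.integrable_sum sum.cong Bochner_Integration.integral_sum)

lemma Ym_bound:
  fixes Z :: "'i \<Rightarrow> 'a \<Rightarrow> complex" and FG FV :: "nat \<Rightarrow> ('i \<Rightarrow> complex) \<Rightarrow> complex"
    and Bg :: "nat \<Rightarrow> 'i set" and Bv :: "'i set" and a \<sigma> :: "nat \<Rightarrow> real"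
  assumes ind: "indep_vars (\<lambda>_. borel) Z J"
    and BgJ: "\<And>l. l < L \<Longrightarrow> Bg l \<subseteq> J" and BvJ: "Bv \<subseteq> J"
    and Bgv: "\<And>l. l < L \<Longrightarrow> Bg l \<inter> Bv = {}"
    and Bgg: "\<And>l l'. l < L \<Longrightarrow> l' < L \<Longrightarrow> l \<noteq> l' \<Longrightarrow> Bg l \<inter> Bg l' = {}"
    and mG: "\<And>l. l < L \<Longrightarrow> FG l \<in> borel_measurable (PiM (Bg l) (\<lambda>_. borel))"
    and rG: "\<And>l x. l < L \<Longrightarrow> FG l (restrict x (Bg l)) = FG l x"
    and mV: "\<And>l. l < L \<Longrightarrow> FV l \<in> borel_measurable (PiM Bv (\<lambda>_. borel))"
    and rV: "\<And>l x. l < L \<Longrightarrow> FV l (restrict x Bv) = FV l x"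
    and bV: "\<And>l \<omega>. l < L \<Longrightarrow> \<omega> \<in> space M \<Longrightarrow> cmod (FV l (\<lambda>i. Z i \<omega>)) \<le> 1"
    and iG: "\<And>l. l < L \<Longrightarrow> integrable M (\<lambda>\<omega>. FG l (\<lambda>i. Z i \<omega>))"
    and eG: "\<And>l. l < L \<Longrightarrow> (\<integral>\<omega>. FG l (\<lambda>i. Z i \<omega>) \<partial>M) = 0"
    and iG2: "\<And>l. l < L \<Longrightarrow> integrable M (\<lambda>\<omega>. (cmod (FG l (\<lambda>i. Z i \<omega>)))\<^sup>2)"
    and eG2: "\<And>l. l < L \<Longrightarrow> (\<integral>\<omega>. (cmod (FG l (\<lambda>i. Z i \<omega>)))\<^sup>2 \<partial>M) = \<sigma> l"
  defines "Y \<equiv> (\<lambda>\<omega>. \<Sum>l<L. complex_of_real (a l) * cnj (FG l (\<lambda>i. Z i \<omega>)) * FV l (\<lambda>i. Z i \<omega>))"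
  shows "integrable M Y" "(\<integral>\<omega>. Y \<omega> \<partial>M) = 0"
    "integrable M (\<lambda>\<omega>. (cmod (Y \<omega>))\<^sup>2)"
    "(\<integral>\<omega>. (cmod (Y \<omega>))\<^sup>2 \<partial>M) \<le> (\<Sum>l<L. (a l)\<^sup>2 * \<sigma> l)"
proof -
  let ?G = "\<lambda>l \<omega>. FG l (\<lambda>i. Z i \<omega>)" and ?V = "\<lambda>l \<omega>. FV l (\<lambda>i. Z i \<omega>)"
  have mVw: "?V l \<in> borel_measurable M" if "l < L" for l
    using blk_meas[OF ind BvJ mV[OF that] rV[OF that]] .
  have iV: "integrable M (?V l)" if "l < L" for l
    using bounded_integrable[OF mVw[OF that] bV[OF that]] .
  have iVV: "integrable M (\<lambda>\<omega>. ?V l \<omega> * cnj (?V l' \<omega>))" if "l < L" "l' < L" for l l'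
  proof (rule integrable_const_bound[where B=1])
    show "AE x in M. norm (?V l x * cnj (?V l' x)) \<le> 1"
      using bV[OF that(1)] bV[OF that(2)] by (auto simp: norm_mult intro!: mult_le_one)
  qed (intro borel_measurable_times cnj_meas mVw that)
  have mGc: "(\<lambda>x. cnj (FG l x)) \<in> borel_measurable (PiM (Bg l) (\<lambda>_. borel))" if "l < L" for l
    using mG[OF that] by measurable
  have GV: "(\<integral>\<omega>. cnj (?G l \<omega>) * ?V l \<omega> \<partial>M) = 0" "integrable M (\<lambda>\<omega>. cnj (?G l \<omega>) * ?V l \<omega>)"
    if "l < L" for l
  proof -
    note T = indep_block[OF ind Bgv[OF that] BgJ[OF that] BvJ mGc[OF that] _ mV[OF that] rV[OF that] _ iV[OF that]]
    show "(\<integral>\<omega>. cnj (?G l \<omega>) * ?V l \<omega> \<partial>M) = 0" "integrable M (\<lambda>\<omega>. cnj (?G l \<omega>) * ?V l \<omega>)"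
      using T rG[OF that] iG[OF that] eG[OF that] by auto
  qed
  show iY: "integrable M Y" unfolding Y_def
    using GV(2) by (auto simp: mult.assoc)
  show "(\<integral>\<omega>. Y \<omega> \<partial>M) = 0" unfolding Y_def
    by (subst Bochner_Integration.integral_sum) (use GV in \<open>auto simp: mult.assoc\<close>)
  have GGc: "(\<integral>\<omega>. cnj (?G l \<omega>) * ?G l' \<omega> \<partial>M) = (if l = l' then complex_of_real (\<sigma> l) else 0)
      \<and> integrable M (\<lambda>\<omega>. cnj (?G l \<omega>) * ?G l' \<omega>)"
    if "l < L" "l' < L" for l l'
  proof (cases "l = l'")
    case True
    have eq: "(\<lambda>\<omega>. cnj (?G l \<omega>) * ?G l \<omega>) = (\<lambda>\<omega>. complex_of_real ((cmod (?G l \<omega>))\<^sup>2))"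
      by (rule ext) (metis complex_norm_square mult.commute)
    show ?thesis
      using True eq iG2[OF that(1)] eG2[OF that(1)] by (simp del: of_real_power)
  next
    case False
    note T = indep_block[OF ind Bgg[OF that False] BgJ[OF that(1)] BgJ[OF that(2)] mGc[OF that(1)] _ mG[OF that(2)] rG[OF that(2)] _ iG[OF that(2)]]
    show ?thesis
      using T rG[OF that(1)] iG[OF that(1)] eG[OF that(1)] False by auto
  qed
  have GG: "(\<integral>\<omega>. cnj (?G l \<omega>) * ?G l' \<omega> \<partial>M) = (if l = l' then complex_of_real (\<sigma> l) else 0)"
     "integrable M (\<lambda>\<omega>. cnj (?G l \<omega>) * ?G l' \<omega>)"
    if "l < L" "l' < L" for l l'
    using GGc[OF that] by auto
  have P: "(\<integral>\<omega>. (cnj (?G l \<omega>) * ?G l' \<omega>) * (?V l \<omega> * cnj (?V l' \<omega>)) \<partial>M)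
        = (if l = l' then complex_of_real (\<sigma> l) else 0) * (\<integral>\<omega>. ?V l \<omega> * cnj (?V l' \<omega>) \<partial>M)"
     "integrable M (\<lambda>\<omega>. (cnj (?G l \<omega>) * ?G l' \<omega>) * (?V l \<omega> * cnj (?V l' \<omega>)))"
    if "l < L" "l' < L" for l l'
  proof -
    let ?F = "\<lambda>x. cnj (FG l (restrict x (Bg l))) * FG l' (restrict x (Bg l'))"
    have mF0: "(\<lambda>x. cnj (FG l (restrict x (Bg l)))) \<in> borel_measurable (PiM (Bg l \<union> Bg l') (\<lambda>_. borel))"
      by (rule measurable_compose[OF measurable_restrict_subset mGc[OF that(1)]]) auto
    have mF1: "(\<lambda>x. FG l' (restrict x (Bg l'))) \<in> borel_measurable (PiM (Bg l \<union> Bg l') (\<lambda>_. borel))"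
      by (rule measurable_compose[OF measurable_restrict_subset mG[OF that(2)]]) auto
    have mF: "?F \<in> borel_measurable (PiM (Bg l \<union> Bg l') (\<lambda>_. borel))"
      using mF0 mF1 by measurable
    have rF: "?F (restrict x (Bg l \<union> Bg l')) = ?F x" for x
      by (simp add: Int_absorb2)
    have Fx: "?F x = cnj (FG l x) * FG l' x" for x using rG that by simp
    let ?H = "\<lambda>x. FV l x * cnj (FV l' x)"
    have mH: "?H \<in> borel_measurable (PiM Bv (\<lambda>_. borel))" using mV[OF that(1)] mV[OF that(2)] by measurable
    have rH: "?H (restrict x Bv) = ?H x" for x using rV that by simp
    have dis: "(Bg l \<union> Bg l') \<inter> Bv = {}" using Bgv that by auto
    have sub: "Bg l \<union> Bg l' \<subseteq> J" using BgJ that by auto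
    have iF: "integrable M (\<lambda>\<omega>. ?F (\<lambda>i. Z i \<omega>))" unfolding Fx using GG(2)[OF that] .
    note T = indep_block[OF ind dis sub BvJ mF rF mH rH iF iVV[OF that]]
    show "(\<integral>\<omega>. (cnj (?G l \<omega>) * ?G l' \<omega>) * (?V l \<omega> * cnj (?V l' \<omega>)) \<partial>M)
        = (if l = l' then complex_of_real (\<sigma> l) else 0) * (\<integral>\<omega>. ?V l \<omega> * cnj (?V l' \<omega>) \<partial>M)"
     "integrable M (\<lambda>\<omega>. (cnj (?G l \<omega>) * ?G l' \<omega>) * (?V l \<omega> * cnj (?V l' \<omega>)))"
      using T GG(1)[OF that] unfolding Fx by auto
  qed
  have YY: "complex_of_real ((cmod (Y \<omega>))\<^sup>2) = (\<Sum>l<L. \<Sum>l'<L. complex_of_real (a l * a l') *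
      ((cnj (?G l \<omega>) * ?G l' \<omega>) * (?V l \<omega> * cnj (?V l' \<omega>))))" for \<omega>
  proof -
    have "complex_of_real ((cmod (Y \<omega>))\<^sup>2) = Y \<omega> * cnj (Y \<omega>)" by (rule complex_norm_square)
    also have "\<dots> = (\<Sum>l<L. \<Sum>l'<L. complex_of_real (a l * a l') *
      ((cnj (?G l \<omega>) * ?G l' \<omega>) * (?V l \<omega> * cnj (?V l' \<omega>))))"
      unfolding Y_def by (simp add: sum_product cnj_sum mult_ac, subst sum.swap, simp add: mult_ac)
    finally show ?thesis .
  qed
  have iYY: "integrable M (\<lambda>\<omega>. complex_of_real ((cmod (Y \<omega>))\<^sup>2))"
    unfolding YY by (intro Bochner_Integration.integrable_sum integrable_mult_right) (use P(2) in auto)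
  then show "integrable M (\<lambda>\<omega>. (cmod (Y \<omega>))\<^sup>2)" using complex_of_real_integrable_eq by blast
  have "complex_of_real (\<integral>\<omega>. (cmod (Y \<omega>))\<^sup>2 \<partial>M) = (\<integral>\<omega>. complex_of_real ((cmod (Y \<omega>))\<^sup>2) \<partial>M)"
    by simp
  also have "\<dots> = (\<Sum>l<L. \<Sum>l'<L. complex_of_real (a l * a l') *
      (if l = l' then complex_of_real (\<sigma> l) else 0) * (\<integral>\<omega>. ?V l \<omega> * cnj (?V l' \<omega>) \<partial>M))"
    unfolding YY
    by (subst integral_sum2) (use P in \<open>auto intro!: sum.cong\<close>)
  also have "\<dots> = (\<Sum>l<L. complex_of_real ((a l)\<^sup>2 * \<sigma> l * (\<integral>\<omega>. (cmod (?V l \<omega>))\<^sup>2 \<partial>M)))"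
  proof (intro sum.cong refl)
    fix l assume l: "l \<in> {..<L}"
    have "(\<integral>\<omega>. ?V l \<omega> * cnj (?V l \<omega>) \<partial>M) = complex_of_real (\<integral>\<omega>. (cmod (?V l \<omega>))\<^sup>2 \<partial>M)"
      by (simp only: complex_norm_square[symmetric] integral_complex_of_real)
    then show "(\<Sum>l'<L. complex_of_real (a l * a l') *
      (if l = l' then complex_of_real (\<sigma> l) else 0) * (\<integral>\<omega>. ?V l \<omega> * cnj (?V l' \<omega>) \<partial>M)) =
      complex_of_real ((a l)\<^sup>2 * \<sigma> l * (\<integral>\<omega>. (cmod (?V l \<omega>))\<^sup>2 \<partial>M))"
      using l by (simp add: if_distrib if_distribR power2_eq_square cong: if_cong)
  qed
  also have "\<dots> = complex_of_real (\<Sum>l<L. (a l)\<^sup>2 * \<sigma> l * (\<integral>\<omega>. (cmod (?V l \<omega>))\<^sup>2 \<partial>M))"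
    by simp
  finally have eqY: "(\<integral>\<omega>. (cmod (Y \<omega>))\<^sup>2 \<partial>M) = (\<Sum>l<L. (a l)\<^sup>2 * \<sigma> l * (\<integral>\<omega>. (cmod (?V l \<omega>))\<^sup>2 \<partial>M))"
    using of_real_eq_iff by blast
  show "(\<integral>\<omega>. (cmod (Y \<omega>))\<^sup>2 \<partial>M) \<le> (\<Sum>l<L. (a l)\<^sup>2 * \<sigma> l)"
    unfolding eqY
  proof (intro sum_mono)
    fix l assume l: "l \<in> {..<L}"
    have s0: "0 \<le> \<sigma> l" using eG2[of l] l integral_nonneg_AE[of "\<lambda>\<omega>. (cmod (?G l \<omega>))\<^sup>2" M] by auto
    have "(\<integral>\<omega>. (cmod (?V l \<omega>))\<^sup>2 \<partial>M) \<le> (\<integral>\<omega>. 1 \<partial>M)"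
    proof (rule integral_mono_AE)
      show "integrable M (\<lambda>\<omega>. (cmod (?V l \<omega>))\<^sup>2)"
        using iVV[of l l] l by (simp only: complex_norm_square[symmetric] complex_of_real_integrable_eq lessThan_iff)
      show "AE \<omega> in M. (cmod (?V l \<omega>))\<^sup>2 \<le> 1"
        using bV[of l] l by (auto intro!: power_le_one)
    qed simp
    then have "(\<integral>\<omega>. (cmod (?V l \<omega>))\<^sup>2 \<partial>M) \<le> 1" by (simp add: prob_space)
    then show "(a l)\<^sup>2 * \<sigma> l * (\<integral>\<omega>. (cmod (?V l \<omega>))\<^sup>2 \<partial>M) \<le> (a l)\<^sup>2 * \<sigma> l"
      using s0 by (simp add: mult_left_le)
  qed
qed

lemma sum_bound:
  fixes Z :: "'i \<Rightarrow> 'a \<Rightarrow> complex" and FY :: "nat \<Rightarrow> ('i \<Rightarrow> complex) \<Rightarrow> complex"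
    and B :: "nat \<Rightarrow> 'i set" and c bnd :: "nat \<Rightarrow> real"
  assumes ind: "indep_vars (\<lambda>_. borel) Z J" and fin: "finite S"
    and BJ: "\<And>m. m \<in> S \<Longrightarrow> B m \<subseteq> J"
    and Bd: "\<And>m m'. m \<in> S \<Longrightarrow> m' \<in> S \<Longrightarrow> m \<noteq> m' \<Longrightarrow> B m \<inter> B m' = {}"
    and mY: "\<And>m. m \<in> S \<Longrightarrow> FY m \<in> borel_measurable (PiM (B m) (\<lambda>_. borel))"
    and rY: "\<And>m x. m \<in> S \<Longrightarrow> FY m (restrict x (B m)) = FY m x"
    and iY: "\<And>m. m \<in> S \<Longrightarrow> integrable M (\<lambda>\<omega>. FY m (\<lambda>i. Z i \<omega>))"
    and eY: "\<And>m. m \<in> S \<Longrightarrow> (\<integral>\<omega>. FY m (\<lambda>i. Z i \<omega>) \<partial>M) = 0"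
    and iY2: "\<And>m. m \<in> S \<Longrightarrow> integrable M (\<lambda>\<omega>. (cmod (FY m (\<lambda>i. Z i \<omega>)))\<^sup>2)"
    and eY2: "\<And>m. m \<in> S \<Longrightarrow> (\<integral>\<omega>. (cmod (FY m (\<lambda>i. Z i \<omega>)))\<^sup>2 \<partial>M) \<le> bnd m"
  shows "integrable M (\<lambda>\<omega>. (cmod (\<Sum>m\<in>S. complex_of_real (c m) * FY m (\<lambda>i. Z i \<omega>)))\<^sup>2)"
    "(\<integral>\<omega>. (cmod (\<Sum>m\<in>S. complex_of_real (c m) * FY m (\<lambda>i. Z i \<omega>)))\<^sup>2 \<partial>M) \<le> (\<Sum>m\<in>S. (c m)\<^sup>2 * bnd m)"
proof -
  let ?Y = "\<lambda>m \<omega>. FY m (\<lambda>i. Z i \<omega>)"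
  have mYc: "(\<lambda>x. cnj (FY m x)) \<in> borel_measurable (PiM (B m) (\<lambda>_. borel))" if "m \<in> S" for m
    using mY[OF that] by (rule cnj_meas)
  have C: "(\<integral>\<omega>. ?Y m \<omega> * cnj (?Y m' \<omega>) \<partial>M) =
      (if m = m' then complex_of_real (\<integral>\<omega>. (cmod (?Y m \<omega>))\<^sup>2 \<partial>M) else 0)
     \<and> integrable M (\<lambda>\<omega>. ?Y m \<omega> * cnj (?Y m' \<omega>))" if "m \<in> S" "m' \<in> S" for m m'
  proof (cases "m = m'")
    case True
    then show ?thesis using iY2[OF that(1)]
      by (simp only: complex_norm_square[symmetric] integral_complex_of_real complex_of_real_integrable_eq if_True) simp
  next
    case False
    note T = indep_block[OF ind Bd[OF that False] BJ[OF that(1)] BJ[OF that(2)] mY[OF that(1)] rY[OF that(1)] mYc[OF that(2)] _ iY[OF that(1)]]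
    show ?thesis using T rY[OF that(2)] iY[OF that(2)] eY[OF that(1)] False by auto
  qed
  have SS: "complex_of_real ((cmod (\<Sum>m\<in>S. complex_of_real (c m) * ?Y m \<omega>))\<^sup>2) =
     (\<Sum>m\<in>S. \<Sum>m'\<in>S. complex_of_real (c m * c m') * (?Y m \<omega> * cnj (?Y m' \<omega>)))" for \<omega>
    by (subst complex_norm_square) (simp add: sum_product cnj_sum mult_ac)
  have iSS: "integrable M (\<lambda>\<omega>. complex_of_real ((cmod (\<Sum>m\<in>S. complex_of_real (c m) * ?Y m \<omega>))\<^sup>2))"
    unfolding SS by (intro Bochner_Integration.integrable_sum integrable_mult_right) (use C in auto)
  then show "integrable M (\<lambda>\<omega>. (cmod (\<Sum>m\<in>S. complex_of_real (c m) * FY m (\<lambda>i. Z i \<omega>)))\<^sup>2)"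
    using complex_of_real_integrable_eq by blast
  have "complex_of_real (\<integral>\<omega>. (cmod (\<Sum>m\<in>S. complex_of_real (c m) * ?Y m \<omega>))\<^sup>2 \<partial>M)
     = (\<integral>\<omega>. complex_of_real ((cmod (\<Sum>m\<in>S. complex_of_real (c m) * ?Y m \<omega>))\<^sup>2) \<partial>M)"
    by simp
  also have "\<dots> = (\<Sum>m\<in>S. \<Sum>m'\<in>S. complex_of_real (c m * c m') *
      (if m = m' then complex_of_real (\<integral>\<omega>. (cmod (?Y m \<omega>))\<^sup>2 \<partial>M) else 0))"
    unfolding SS by (subst integral_sum2) (use C in \<open>auto intro!: sum.cong\<close>)
  also have "\<dots> = (\<Sum>m\<in>S. complex_of_real ((c m)\<^sup>2 * (\<integral>\<omega>. (cmod (?Y m \<omega>))\<^sup>2 \<partial>M)))"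
    using fin by (intro sum.cong refl) (simp add: if_distrib if_distribR power2_eq_square cong: if_cong)
  also have "\<dots> = complex_of_real (\<Sum>m\<in>S. (c m)\<^sup>2 * (\<integral>\<omega>. (cmod (?Y m \<omega>))\<^sup>2 \<partial>M))"
    by simp
  finally have eq: "(\<integral>\<omega>. (cmod (\<Sum>m\<in>S. complex_of_real (c m) * ?Y m \<omega>))\<^sup>2 \<partial>M)
      = (\<Sum>m\<in>S. (c m)\<^sup>2 * (\<integral>\<omega>. (cmod (?Y m \<omega>))\<^sup>2 \<partial>M))"
    using of_real_eq_iff by blast
  show "(\<integral>\<omega>. (cmod (\<Sum>m\<in>S. complex_of_real (c m) * FY m (\<lambda>i. Z i \<omega>)))\<^sup>2 \<partial>M) \<le> (\<Sum>m\<in>S. (c m)\<^sup>2 * bnd m)"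
    unfolding eq by (intro sum_mono mult_left_mono eY2) auto
qed

lemma combo:
  fixes Z :: "'i \<Rightarrow> 'a \<Rightarrow> complex" and FG FV :: "nat \<Rightarrow> nat \<Rightarrow> ('i \<Rightarrow> complex) \<Rightarrow> complex"
    and Bg :: "nat \<Rightarrow> nat \<Rightarrow> 'i set" and Bv Bm :: "nat \<Rightarrow> 'i set" and a \<sigma> :: "nat \<Rightarrow> nat \<Rightarrow> real"
    and c :: "nat \<Rightarrow> real"
  assumes ind: "indep_vars (\<lambda>_. borel) Z J" and fin: "finite S"
    and BgJ: "\<And>m l. m \<in> S \<Longrightarrow> l < L \<Longrightarrow> Bg m l \<subseteq> J" and BvJ: "\<And>m. m \<in> S \<Longrightarrow> Bv m \<subseteq> J"
    and Bgv: "\<And>m l. m \<in> S \<Longrightarrow> l < L \<Longrightarrow> Bg m l \<inter> Bv m = {}"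
    and Bgg: "\<And>m l l'. m \<in> S \<Longrightarrow> l < L \<Longrightarrow> l' < L \<Longrightarrow> l \<noteq> l' \<Longrightarrow> Bg m l \<inter> Bg m l' = {}"
    and Bgm: "\<And>m l. m \<in> S \<Longrightarrow> l < L \<Longrightarrow> Bg m l \<subseteq> Bm m" and Bvm: "\<And>m. m \<in> S \<Longrightarrow> Bv m \<subseteq> Bm m"
    and Bmd: "\<And>m m'. m \<in> S \<Longrightarrow> m' \<in> S \<Longrightarrow> m \<noteq> m' \<Longrightarrow> Bm m \<inter> Bm m' = {}"
    and mG: "\<And>m l. m \<in> S \<Longrightarrow> l < L \<Longrightarrow> FG m l \<in> borel_measurable (PiM (Bg m l) (\<lambda>_. borel))"
    and rG: "\<And>m l x. m \<in> S \<Longrightarrow> l < L \<Longrightarrow> FG m l (restrict x (Bg m l)) = FG m l x"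
    and mV: "\<And>m l. m \<in> S \<Longrightarrow> l < L \<Longrightarrow> FV m l \<in> borel_measurable (PiM (Bv m) (\<lambda>_. borel))"
    and rV: "\<And>m l x. m \<in> S \<Longrightarrow> l < L \<Longrightarrow> FV m l (restrict x (Bv m)) = FV m l x"
    and bV: "\<And>m l \<omega>. m \<in> S \<Longrightarrow> l < L \<Longrightarrow> \<omega> \<in> space M \<Longrightarrow> cmod (FV m l (\<lambda>i. Z i \<omega>)) \<le> 1"
    and iG: "\<And>m l. m \<in> S \<Longrightarrow> l < L \<Longrightarrow> integrable M (\<lambda>\<omega>. FG m l (\<lambda>i. Z i \<omega>))"
    and eG: "\<And>m l. m \<in> S \<Longrightarrow> l < L \<Longrightarrow> (\<integral>\<omega>. FG m l (\<lambda>i. Z i \<omega>) \<partial>M) = 0"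
    and iG2: "\<And>m l. m \<in> S \<Longrightarrow> l < L \<Longrightarrow> integrable M (\<lambda>\<omega>. (cmod (FG m l (\<lambda>i. Z i \<omega>)))\<^sup>2)"
    and eG2: "\<And>m l. m \<in> S \<Longrightarrow> l < L \<Longrightarrow> (\<integral>\<omega>. (cmod (FG m l (\<lambda>i. Z i \<omega>)))\<^sup>2 \<partial>M) = \<sigma> m l"
  shows "integrable M (\<lambda>\<omega>. (cmod (\<Sum>m\<in>S. complex_of_real (c m) *
            (\<Sum>l<L. complex_of_real (a m l) * cnj (FG m l (\<lambda>i. Z i \<omega>)) * FV m l (\<lambda>i. Z i \<omega>))))\<^sup>2)"
    "(\<integral>\<omega>. (cmod (\<Sum>m\<in>S. complex_of_real (c m) *
            (\<Sum>l<L. complex_of_real (a m l) * cnj (FG m l (\<lambda>i. Z i \<omega>)) * FV m l (\<lambda>i. Z i \<omega>))))\<^sup>2 \<partial>M)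
       \<le> (\<Sum>m\<in>S. (c m)\<^sup>2 * (\<Sum>l<L. (a m l)\<^sup>2 * \<sigma> m l))"
proof -
  define B where "B m = (\<Union>l<L. Bg m l) \<union> Bv m" for m
  define FY where "FY m x = (\<Sum>l<L. complex_of_real (a m l) * cnj (FG m l x) * FV m l x)" for m x
  have YB: "integrable M (\<lambda>\<omega>. FY m (\<lambda>i. Z i \<omega>))" "(\<integral>\<omega>. FY m (\<lambda>i. Z i \<omega>) \<partial>M) = 0"
    "integrable M (\<lambda>\<omega>. (cmod (FY m (\<lambda>i. Z i \<omega>)))\<^sup>2)"
    "(\<integral>\<omega>. (cmod (FY m (\<lambda>i. Z i \<omega>)))\<^sup>2 \<partial>M) \<le> (\<Sum>l<L. (a m l)\<^sup>2 * \<sigma> m l)"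
    if m: "m \<in> S" for m
    using Ym_bound[OF ind BgJ[OF m] BvJ[OF m] Bgv[OF m] Bgg[OF m] mG[OF m] rG[OF m] mV[OF m] rV[OF m]
        bV[OF m] iG[OF m] eG[OF m] iG2[OF m] eG2[OF m], where a="a m"]
    unfolding FY_def by auto
  have rY: "FY m (restrict x (B m)) = FY m x" if m: "m \<in> S" for m x
  proof -
    have "FG m l (restrict x (B m)) = FG m l x" if "l < L" for l
    proof -
      have "FG m l (restrict x (B m)) = FG m l (restrict (restrict x (B m)) (Bg m l))" by (rule rG[OF m that, symmetric])
      also have "restrict (restrict x (B m)) (Bg m l) = restrict x (Bg m l)"
        using that by (auto simp: B_def restrict_def fun_eq_iff)
      finally show ?thesis using rG[OF m that] by metis
    qed
    moreover have "FV m l (restrict x (B m)) = FV m l x" if "l < L" for l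
    proof -
      have "FV m l (restrict x (B m)) = FV m l (restrict (restrict x (B m)) (Bv m))" by (rule rV[OF m that, symmetric])
      also have "restrict (restrict x (B m)) (Bv m) = restrict x (Bv m)"
        by (auto simp: B_def restrict_def fun_eq_iff)
      finally show ?thesis using rV[OF m that] by metis
    qed
    ultimately show ?thesis unfolding FY_def by (intro sum.cong) auto
  qed
  have mY: "FY m \<in> borel_measurable (PiM (B m) (\<lambda>_. borel))" if m: "m \<in> S" for m
  proof -
    have 1: "FG m l \<in> borel_measurable (PiM (B m) (\<lambda>_. borel))" if "l < L" for l
      by (rule restrict_comp_meas[OF _ mG[OF m that] rG[OF m that]]) (use that in \<open>auto simp: B_def\<close>)
    have 2: "FV m l \<in> borel_measurable (PiM (B m) (\<lambda>_. borel))" if "l < L" for l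
      by (rule restrict_comp_meas[OF _ mV[OF m that] rV[OF m that]]) (auto simp: B_def)
    show ?thesis unfolding FY_def
      by (intro borel_measurable_sum borel_measurable_times cnj_meas 1 2 borel_measurable_const) auto
  qed
  have BJ: "B m \<subseteq> J" if "m \<in> S" for m using BgJ BvJ that by (auto simp: B_def)
  have Bd: "B m \<inter> B m' = {}" if "m \<in> S" "m' \<in> S" "m \<noteq> m'" for m m'
  proof -
    have "B m \<subseteq> Bm m" "B m' \<subseteq> Bm m'" using Bgm Bvm that by (auto simp: B_def)
    then show ?thesis using Bmd[OF that] by auto
  qed
  note SB = sum_bound[OF ind fin BJ Bd mY rY YB(1) YB(2) YB(3) YB(4), where c=c]
  show "integrable M (\<lambda>\<omega>. (cmod (\<Sum>m\<in>S. complex_of_real (c m) *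
            (\<Sum>l<L. complex_of_real (a m l) * cnj (FG m l (\<lambda>i. Z i \<omega>)) * FV m l (\<lambda>i. Z i \<omega>))))\<^sup>2)"
    "(\<integral>\<omega>. (cmod (\<Sum>m\<in>S. complex_of_real (c m) *
            (\<Sum>l<L. complex_of_real (a m l) * cnj (FG m l (\<lambda>i. Z i \<omega>)) * FV m l (\<lambda>i. Z i \<omega>))))\<^sup>2 \<partial>M)
       \<le> (\<Sum>m\<in>S. (c m)\<^sup>2 * (\<Sum>l<L. (a m l)\<^sup>2 * \<sigma> m l))"
    using SB unfolding FY_def by auto
qed

end

lemma mpchan_cong:
  "(\<And>l. l < L \<Longrightarrow> G l = G' l) \<Longrightarrow> mpchan N L \<beta> \<kappa> \<theta> G = mpchan N L \<beta> \<kappa> \<theta> G'"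
  unfolding mpchan_def by (intro ext arg_cong2[where f="(*)"] refl sum.cong) auto

lemma mpchan_split:
  "mpchan N L \<beta> \<kappa> \<theta> G n = mpchan N L \<beta> \<kappa> \<theta> (\<lambda>l. G l - D l) n + mpchan N L \<beta> \<kappa> \<theta> D n"
  unfolding mpchan_def by (simp add: distrib_left[symmetric] sum.distrib[symmetric] algebra_simps)

lemma hip_add_left: "hip N (\<lambda>n. x n + y n) w = hip N x w + hip N y w"
  unfolding hip_def by (simp add: distrib_right sum.distrib)

lemma hip_mpchan:
  "hip N (mpchan N L \<beta> \<kappa> \<theta> G) w =
   (\<Sum>l<L. complex_of_real (sqrt (\<beta> * real N) * sqrt (\<kappa> l)) * cnj (G l) * hip N (steer N (\<theta> l)) w)"
  unfolding hip_def mpchan_def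
  by (simp add: cnj_sum sum_distrib_left sum_distrib_right mult_ac) (subst sum.swap, simp add: mult_ac)

lemma steer_norm:
  assumes "N \<ge> 1" shows "(\<Sum>n<N. (cmod (steer N \<theta> n))\<^sup>2) = 1"
proof -
  have "(\<Sum>n<N. (cmod (steer N \<theta> n))\<^sup>2) = (\<Sum>n<N. 1 / real N)"
    by (intro sum.cong refl) (simp add: steer_def norm_divide power_divide)
  also have "\<dots> = 1" using assms by simp
  finally show ?thesis .
qed

lemma hip_bound:
  assumes "(\<Sum>n<N. (cmod (x n))\<^sup>2) = 1" "(\<Sum>n<N. (cmod (y n))\<^sup>2) = 1"
  shows "cmod (hip N x y) \<le> 1"
proof -
  have "cmod (hip N x y) \<le> (\<Sum>n<N. \<bar>cmod (x n)\<bar> * \<bar>cmod (y n)\<bar>)"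
    unfolding hip_def by (rule order_trans[OF norm_sum]) (simp add: norm_mult)
  also have "\<dots> \<le> L2_set (\<lambda>n. cmod (x n)) {..<N} * L2_set (\<lambda>n. cmod (y n)) {..<N}"
    by (rule L2_set_mult_ineq)
  also have "\<dots> = 1" using assms by (simp add: L2_set_def)
  finally show ?thesis .
qed

lemma FW_meas:
  fixes W :: "(nat \<Rightarrow> nat \<Rightarrow> complex) \<Rightarrow> nat \<Rightarrow> complex" and f :: "nat \<Rightarrow> nat \<Rightarrow> 'i"
  assumes W: "W \<in> measurable (Pi\<^sub>M UNIV (\<lambda>_. Pi\<^sub>M UNIV (\<lambda>_. borel))) (Pi\<^sub>M UNIV (\<lambda>_. borel))"
  shows "(\<lambda>x. W (\<lambda>i. if P i then mpchan N L (\<beta> i) (\<kappa> i) (\<theta> i) (\<lambda>l. x (f i l)) else (\<lambda>_. 0)))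
     \<in> measurable (PiM B (\<lambda>_. borel)) (Pi\<^sub>M UNIV (\<lambda>_. borel))"
proof -
  have inner1: "(\<lambda>x. mpchan N L (\<beta> i) (\<kappa> i) (\<theta> i) (\<lambda>l. x (f i l)) n) \<in> borel_measurable (PiM B (\<lambda>_. borel))"
    for i n unfolding mpchan_def by measurable
  have inner2: "(\<lambda>x. if P i then mpchan N L (\<beta> i) (\<kappa> i) (\<theta> i) (\<lambda>l. x (f i l)) else (\<lambda>_. 0))
      \<in> measurable (PiM B (\<lambda>_. borel)) (Pi\<^sub>M UNIV (\<lambda>_. borel))" for i
  proof (cases "P i")
    case True
    have "(\<lambda>x. \<lambda>n\<in>UNIV. mpchan N L (\<beta> i) (\<kappa> i) (\<theta> i) (\<lambda>l. x (f i l)) n)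
      \<in> measurable (PiM B (\<lambda>_. borel)) (Pi\<^sub>M UNIV (\<lambda>_. borel))"
      by (rule measurable_restrict) (rule inner1)
    then show ?thesis using True by (simp add: restrict_def)
  next
    case False
    then show ?thesis by (simp add: space_PiM)
  qed
  have "(\<lambda>x. \<lambda>i\<in>UNIV. if P i then mpchan N L (\<beta> i) (\<kappa> i) (\<theta> i) (\<lambda>l. x (f i l)) else (\<lambda>_. 0))
      \<in> measurable (PiM B (\<lambda>_. borel)) (Pi\<^sub>M UNIV (\<lambda>_. Pi\<^sub>M UNIV (\<lambda>_. borel)))"
    by (rule measurable_restrict) (rule inner2)
  then have "(\<lambda>x. (\<lambda>i. if P i then mpchan N L (\<beta> i) (\<kappa> i) (\<theta> i) (\<lambda>l. x (f i l)) else (\<lambda>_. 0)))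
      \<in> measurable (PiM B (\<lambda>_. borel)) (Pi\<^sub>M UNIV (\<lambda>_. Pi\<^sub>M UNIV (\<lambda>_. borel)))" by (simp add: restrict_def)
  from measurable_compose[OF this W] show ?thesis .
qed

lemma hip_meas:
  assumes "F \<in> measurable (PiM B (\<lambda>_. borel)) (Pi\<^sub>M UNIV (\<lambda>_. borel))"
  shows "(\<lambda>x. hip N s (F x)) \<in> borel_measurable (PiM B (\<lambda>_. (borel::complex measure)))"
proof -
  have "(\<lambda>x. F x n) \<in> borel_measurable (PiM B (\<lambda>_. (borel::complex measure)))" for n
    using measurable_compose[OF assms measurable_component_singleton[of n UNIV]] by simp
  then show ?thesis unfolding hip_def by (intro borel_measurable_sum borel_measurable_times) auto
qed


lemma nn_le:
  assumes "integrable M f" "\<And>\<omega>. 0 \<le> f \<omega>" "integral\<^sup>L M f \<le> c"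
  shows "(\<integral>\<^sup>+\<omega>. ennreal (f \<omega>) \<partial>M) \<le> ennreal c"
  using assms by (subst nn_integral_eq_integral) (auto intro: ennreal_leI)

theorem lemma3:
  fixes \<Omega> :: "'w measure" and M K N L k :: nat
    and A :: "nat \<Rightarrow> nat set"
    and \<beta> :: "nat \<Rightarrow> nat \<Rightarrow> real"
    and \<kappa> \<theta> b :: "nat \<Rightarrow> nat \<Rightarrow> nat \<Rightarrow> real"
    and g \<Delta> :: "nat \<Rightarrow> nat \<Rightarrow> nat \<Rightarrow> 'w \<Rightarrow> complex"
    and P :: "nat \<Rightarrow> real"
    and W :: "nat \<Rightarrow> nat \<Rightarrow> (nat \<Rightarrow> nat \<Rightarrow> complex) \<Rightarrow> nat \<Rightarrow> complex"
  defines "U \<equiv> ugroup K A"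
    and "p \<equiv> (\<lambda>m. P m / real (card (ugroup K A m)))"
    and "h \<equiv> (\<lambda>m k \<omega>. mpchan N L (\<beta> m k) (\<kappa> m k) (\<theta> m k) (\<lambda>l. g m k l \<omega>))"
    and "hq \<equiv> (\<lambda>m k \<omega>. mpchan N L (\<beta> m k) (\<kappa> m k) (\<theta> m k) (\<lambda>l. g m k l \<omega> - \<Delta> m k l \<omega>))"
    and "w \<equiv> (\<lambda>m j \<omega>. W m j (\<lambda>i. if i \<in> ugroup K A m - {j} then mpchan N L (\<beta> m i) (\<kappa> m i) (\<theta> m i) (\<lambda>l. g m i l \<omega> - \<Delta> m i l \<omega>) else (\<lambda>_. 0)))"
  assumes "prob_space \<Omega>"
    and "N \<ge> 1"
    and "k < K"
    and "\<forall>k'<K. A k' \<subseteq> {..<M}"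
    and "\<forall>m<M. \<forall>k'<K. \<beta> m k' \<ge> 0"
    and "\<forall>m<M. \<forall>k'<K. \<forall>l<L. 0 \<le> \<kappa> m k' l \<and> \<kappa> m k' l \<le> 1"
    and "\<forall>m<M. \<forall>k'<K. (\<Sum>l<L. \<kappa> m k' l) = 1"
    and "\<forall>m<M. \<forall>k'<K. \<forall>l<L. b m k' l \<ge> 0"
    and "\<forall>m<M. P m \<ge> 0"
    and "\<forall>m<M. \<forall>k'<K. \<forall>l<L. cgauss \<Omega> 1 (g m k' l)"
    and "\<forall>m<M. \<forall>k'<K. \<forall>l<L. m \<in> A k' \<longrightarrow> cgauss \<Omega> (2 powr (- b m k' l)) (\<Delta> m k' l)"
    and "\<forall>m<M. \<forall>k'<K. \<forall>l<L. m \<in> A k' \<longrightarrow>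
           prob_space.indep_var \<Omega> borel (\<Delta> m k' l) borel (\<lambda>\<omega>. g m k' l \<omega> - \<Delta> m k' l \<omega>)"
    and "prob_space.indep_vars \<Omega> (\<lambda>_. borel)
           (\<lambda>(m, k', l) \<omega>. (g m k' l \<omega>, if m \<in> A k' then \<Delta> m k' l \<omega> else 0))
           ({..<M} \<times> {..<K} \<times> {..<L})"
    and "\<forall>m<M. \<forall>j\<in>U m.
           W m j \<in> measurable (Pi\<^sub>M UNIV (\<lambda>_. Pi\<^sub>M UNIV (\<lambda>_. borel))) (Pi\<^sub>M UNIV (\<lambda>_. borel))"
    and "\<forall>m<M. \<forall>j\<in>U m. \<forall>\<omega>\<in>space \<Omega>. (\<Sum>n<N. (cmod (w m j \<omega> n))\<^sup>2) = 1"
    and "\<forall>m<M. \<forall>j\<in>U m. \<forall>i\<in>U m - {j}. \<forall>\<omega>\<in>space \<Omega>. hip N (hq m i \<omega>) (w m j \<omega>) = 0"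
  shows "(\<integral>\<^sup>+\<omega>. ennreal (sigD N A p h w k \<omega>) \<partial>\<Omega>)
           \<le> ennreal (\<Sum>m\<in>A k. p m * \<beta> m k * real N)
       \<and> (\<integral>\<^sup>+\<omega>. ennreal (sigSGI K N A p h w k \<omega>) \<partial>\<Omega>)
           \<le> ennreal (\<Sum>j\<in>{..<K} - {k}. \<Sum>m\<in>A j \<inter> A k.
                 p m * \<beta> m k * real N * (\<Sum>l<L. \<kappa> m k l * 2 powr (- b m k l)))
       \<and> (\<integral>\<^sup>+\<omega>. ennreal (sigIGI K N A p h w k \<omega>) \<partial>\<Omega>)
           \<le> ennreal (\<Sum>j\<in>{..<K} - {k}. \<Sum>m\<in>A j - A k. p m * \<beta> m k * real N)"
proof -
  interpret prob_space \<Omega> by (rule assms(6))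
  note bN = assms(7) and kK = assms(8) and AM = assms(9) and \<beta>0 = assms(10) and \<kappa>0 = assms(11)
    and \<kappa>1 = assms(12) and b0 = assms(13) and P0 = assms(14) and gG = assms(15) and dG = assms(16)
    and indD = assms(17) and indA = assms(18) and Wm = assms(19) and wn = assms(20) and orth = assms(21)
  define Dp where "Dp m k' l \<omega> = (if m \<in> A k' then \<Delta> m k' l \<omega> else 0)" for m k' l \<omega>
  define I where "I = {..<M} \<times> {..<K} \<times> {..<L}"
  define X where "X = (\<lambda>(m::nat,k'::nat,l::nat). Dp m k' l)"
  define Y where "Y = (\<lambda>(m::nat,k'::nat,l::nat) \<omega>. g m k' l \<omega> - Dp m k' l \<omega>)"
  define Zf where "Zf = (\<lambda>(i::nat\<times>nat\<times>nat,b::bool) \<omega>. if b then X i \<omega> else Y i \<omega>)"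
  define J where "J = I \<times> (UNIV :: bool set)"
  have Zt[simp]: "Zf ((m,k',l),True) \<omega> = Dp m k' l \<omega>" for m k' l \<omega> by (simp add: Zf_def X_def)
  have Zfa[simp]: "Zf ((m,k',l),False) \<omega> = g m k' l \<omega> - Dp m k' l \<omega>" for m k' l \<omega> by (simp add: Zf_def Y_def)
  have gmom: "g m k' l \<in> borel_measurable \<Omega>" "integrable \<Omega> (g m k' l)" "(\<integral>\<omega>. g m k' l \<omega> \<partial>\<Omega>) = 0"
    "integrable \<Omega> (\<lambda>\<omega>. (cmod (g m k' l \<omega>))\<^sup>2)" "(\<integral>\<omega>. (cmod (g m k' l \<omega>))\<^sup>2 \<partial>\<Omega>) = 1"
    if "m < M" "k' < K" "l < L" for m k' l
    using cgauss_moments[OF gG[rule_format, OF that]] by auto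
  have dmom: "\<Delta> m k' l \<in> borel_measurable \<Omega>" "integrable \<Omega> (\<Delta> m k' l)" "(\<integral>\<omega>. \<Delta> m k' l \<omega> \<partial>\<Omega>) = 0"
    "integrable \<Omega> (\<lambda>\<omega>. (cmod (\<Delta> m k' l \<omega>))\<^sup>2)" "(\<integral>\<omega>. (cmod (\<Delta> m k' l \<omega>))\<^sup>2 \<partial>\<Omega>) = 2 powr (- b m k' l)"
    if "m < M" "k' < K" "l < L" "m \<in> A k'" for m k' l
    using cgauss_moments[OF dG[rule_format, OF that]] by auto
  have indP: "indep_vars (\<lambda>_. borel) (\<lambda>i \<omega>. (X i \<omega>, Y i \<omega>)) I"
  proof -
    have mf: "(\<lambda>(a::complex, b::complex). (b, a - b)) \<in> borel_measurable borel"
      unfolding case_prod_beta by (rule borel_measurable_continuous_onI) (intro continuous_intros)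
    have "indep_vars (\<lambda>_. borel) (\<lambda>i \<omega>. (\<lambda>(a::complex, b::complex). (b, a - b))
       ((\<lambda>(m, k', l) \<omega>. (g m k' l \<omega>, if m \<in> A k' then \<Delta> m k' l \<omega> else 0)) i \<omega>)) I"
      unfolding I_def by (rule indep_vars_compose2[OF indA mf])
    then show ?thesis
      by (rule indep_vars_cong[THEN iffD1, rotated 3]) (auto simp: X_def Y_def Dp_def fun_eq_iff)
  qed
  have ind2: "indep_var borel (X i) borel (Y i)" if "i \<in> I" for i
  proof -
    obtain m k' l where i: "i = (m,k',l)" by (cases i) auto
    have r: "m < M" "k' < K" "l < L" using that i by (auto simp: I_def)
    show ?thesis
    proof (cases "m \<in> A k'")
      case True
      have "X i = \<Delta> m k' l" "Y i = (\<lambda>\<omega>. g m k' l \<omega> - \<Delta> m k' l \<omega>)"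
        using True i by (auto simp: X_def Y_def Dp_def fun_eq_iff)
      then show ?thesis using indD r True by auto
    next
      case False
      have "X i = (\<lambda>_. 0)" "Y i = g m k' l"
        using False i by (auto simp: X_def Y_def Dp_def fun_eq_iff)
      then show ?thesis using indep_var_const gmom(1)[OF r] by auto
    qed
  qed
  have finI: "finite I" by (simp add: I_def)
  have indZ: "indep_vars (\<lambda>_. borel) Zf J"
    using flatten_pairs[OF finI indP ind2] unfolding Zf_def J_def .
  define FW where "FW m j x = W m j (\<lambda>i. if i \<in> ugroup K A m - {j} then mpchan N L (\<beta> m i) (\<kappa> m i) (\<theta> m i) (\<lambda>l. x ((m,i,l),False)) else (\<lambda>_. 0))" for m j x
  define Bv where "Bv m j = {((m,i,l),False) | i l. i \<in> ugroup K A m - {j} \<and> l < L}" for m j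
  define FV where "FV m j l x = hip N (steer N (\<theta> m k l)) (FW m j x)" for m j l x
  define Bm where "Bm m = {z :: (nat\<times>nat\<times>nat)\<times>bool. fst (fst z) = m}" for m
  define a where "a m l = sqrt (\<beta> m k * real N) * sqrt (\<kappa> m k l)" for m l
  have FW_eq: "FW m j (\<lambda>i. Zf i \<omega>) = w m j \<omega>" for m j \<omega>
    unfolding FW_def w_def
    by (intro arg_cong[where f="W m j"] ext) (auto simp: Dp_def ugroup_def)
  have FV_eq[simp]: "FV m j l (\<lambda>i. Zf i \<omega>) = hip N (steer N (\<theta> m k l)) (w m j \<omega>)" for m j l \<omega>
    by (simp add: FV_def FW_eq)
  have mV: "FV m j l \<in> borel_measurable (PiM (Bv m j) (\<lambda>_. borel))" if "m < M" "j \<in> U m" for m j l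
    unfolding FV_def FW_def
    by (rule hip_meas, rule FW_meas) (use Wm that in auto)
  have rW: "FW m j (restrict x (Bv m j)) = FW m j x" for m j x
    unfolding FW_def
    by (intro arg_cong[where f="W m j"] ext if_cong refl mpchan_cong) (auto simp: Bv_def)
  have rV: "FV m j l (restrict x (Bv m j)) = FV m j l x" for m j l x
    unfolding FV_def rW ..
  have bV: "cmod (FV m j l (\<lambda>i. Zf i \<omega>)) \<le> 1" if "m < M" "j \<in> U m" "\<omega> \<in> space \<Omega>" for m j l \<omega>
    unfolding FV_eq by (rule hip_bound[OF steer_norm[OF bN]]) (use wn that in auto)
  have BvJ: "Bv m j \<subseteq> J" if "m < M" for m j
    using that by (auto simp: Bv_def J_def I_def ugroup_def)
  have Bvm: "Bv m j \<subseteq> Bm m" for m j by (auto simp: Bv_def Bm_def)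
  have Bmd: "Bm m \<inter> Bm m' = {}" if "m \<noteq> m'" for m m' using that by (auto simp: Bm_def)
  have p0: "0 \<le> p m" if "m < M" for m using P0 that by (simp add: p_def)
  have a2: "(a m l)\<^sup>2 = \<beta> m k * real N * \<kappa> m k l" if "m < M" "l < L" for m l
    using \<beta>0 \<kappa>0 that kK by (simp add: a_def power_mult_distrib)
  have hipH: "hip N (h m k \<omega>) v = (\<Sum>l<L. complex_of_real (a m l) * cnj (g m k l \<omega>) * hip N (steer N (\<theta> m k l)) v)"
    for m \<omega> v unfolding h_def a_def hip_mpchan ..
  define FGg where "FGg m l x = x ((m,k,l),True) + x ((m,k,l),False)" for m l :: nat and x :: "(nat\<times>nat\<times>nat)\<times>bool \<Rightarrow> complex"
  define Bgg where "Bgg m l = {((m,k,l),True), ((m,k,l),False)}" for m l :: nat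
  have FGg_eq[simp]: "FGg m l (\<lambda>i. Zf i \<omega>) = g m k l \<omega>" for m l \<omega> by (simp add: FGg_def)
  have mGg: "FGg m l \<in> borel_measurable (PiM (Bgg m l) (\<lambda>_. borel))" for m l
    unfolding FGg_def by measurable
  have rGg: "FGg m l (restrict x (Bgg m l)) = FGg m l x" for m l x by (simp add: FGg_def Bgg_def)
  have finA: "finite (A j)" if "j < K" for j using AM that finite_subset by blast
  have AjM: "m < M" if "m \<in> A j" "j < K" for m j using AM that by auto
  have jU: "j \<in> U m" if "m \<in> A j" "j < K" for m j using that by (simp add: U_def ugroup_def)
  have BgJ: "Bgg m l \<subseteq> J" if "m < M" "l < L" for m l using that kK by (auto simp: Bgg_def J_def I_def)
  have Bggm: "Bgg m l \<subseteq> Bm m" for m l by (auto simp: Bgg_def Bm_def)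
  have Bggd: "Bgg m l \<inter> Bgg m l' = {}" if "l \<noteq> l'" for m l l' using that by (auto simp: Bgg_def)
  have Bgv: "Bgg m l \<inter> Bv m j = {}" if "k \<notin> ugroup K A m - {j}" for m l j
    using that by (auto simp: Bgg_def Bv_def)
  have D: "integrable \<Omega> (\<lambda>\<omega>. (cmod (\<Sum>m\<in>A k. complex_of_real (sqrt (p m)) *
            (\<Sum>l<L. complex_of_real (a m l) * cnj (FGg m l (\<lambda>i. Zf i \<omega>)) * FV m k l (\<lambda>i. Zf i \<omega>))))\<^sup>2)
     \<and> (\<integral>\<omega>. (cmod (\<Sum>m\<in>A k. complex_of_real (sqrt (p m)) *
            (\<Sum>l<L. complex_of_real (a m l) * cnj (FGg m l (\<lambda>i. Zf i \<omega>)) * FV m k l (\<lambda>i. Zf i \<omega>))))\<^sup>2 \<partial>\<Omega>)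
       \<le> (\<Sum>m\<in>A k. (sqrt (p m))\<^sup>2 * (\<Sum>l<L. (a m l)\<^sup>2 * 1))"
    apply (rule conjI)
    apply (rule combo(1)[OF indZ finA[OF kK], where Bg=Bgg and Bv="\<lambda>m. Bv m k" and Bm=Bm])
    prefer 17
    apply (rule combo(2)[OF indZ finA[OF kK], where Bg=Bgg and Bv="\<lambda>m. Bv m k" and Bm=Bm])
    using kK AjM jU mGg rGg mV rV bV BvJ Bvm Bmd gmom BgJ Bggm Bggd Bgv rGg[unfolded restrict_def] rV[unfolded restrict_def]
    apply auto
    done
  have sumb: "(\<Sum>m\<in>S. (sqrt (p m))\<^sup>2 * (\<Sum>l<L. (a m l)\<^sup>2 * 1)) = (\<Sum>m\<in>S. p m * \<beta> m k * real N)"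
    if "S \<subseteq> {..<M}" for S
  proof (intro sum.cong refl)
    fix m assume m: "m \<in> S"
    then have mM: "m < M" using that by auto
    have "(\<Sum>l<L. (a m l)\<^sup>2 * 1) = (\<Sum>l<L. \<beta> m k * real N * \<kappa> m k l)" using a2 mM by simp
    also have "\<dots> = \<beta> m k * real N" using \<kappa>1 mM kK by (simp add: sum_distrib_left[symmetric])
    finally show "(sqrt (p m))\<^sup>2 * (\<Sum>l<L. (a m l)\<^sup>2 * 1) = p m * \<beta> m k * real N"
      using p0[OF mM] by simp
  qed
  have sigD_eq: "sigD N A p h w k = (\<lambda>\<omega>. (cmod (\<Sum>m\<in>A k. complex_of_real (sqrt (p m)) *
            (\<Sum>l<L. complex_of_real (a m l) * cnj (FGg m l (\<lambda>i. Zf i \<omega>)) * FV m k l (\<lambda>i. Zf i \<omega>))))\<^sup>2)"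
    by (rule ext) (simp add: sigD_def hipH)
  have partD: "(\<integral>\<^sup>+\<omega>. ennreal (sigD N A p h w k \<omega>) \<partial>\<Omega>) \<le> ennreal (\<Sum>m\<in>A k. p m * \<beta> m k * real N)"
    unfolding sigD_eq
    by (rule nn_le) (use D sumb[of "A k"] AM kK in auto)
  have kug: "k \<notin> ugroup K A m" if "m \<notin> A k" for m using that by (simp add: ugroup_def)
  have IGIj: "integrable \<Omega> (\<lambda>\<omega>. (cmod (\<Sum>m\<in>A j - A k. complex_of_real (sqrt (p m)) *
            (\<Sum>l<L. complex_of_real (a m l) * cnj (FGg m l (\<lambda>i. Zf i \<omega>)) * FV m j l (\<lambda>i. Zf i \<omega>))))\<^sup>2)
     \<and> (\<integral>\<omega>. (cmod (\<Sum>m\<in>A j - A k. complex_of_real (sqrt (p m)) *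
            (\<Sum>l<L. complex_of_real (a m l) * cnj (FGg m l (\<lambda>i. Zf i \<omega>)) * FV m j l (\<lambda>i. Zf i \<omega>))))\<^sup>2 \<partial>\<Omega>)
       \<le> (\<Sum>m\<in>A j - A k. (sqrt (p m))\<^sup>2 * (\<Sum>l<L. (a m l)\<^sup>2 * 1))" if j: "j < K" for j
  proof -
    let ?S = "A j - A k"
    have fin: "finite ?S" using finA[OF j] by simp
    have SM: "m < M" "j \<in> U m" "m \<notin> A k" if "m \<in> ?S" for m using AjM[OF _ j] jU[OF _ j] that by auto
    have c1: "\<And>m l. m \<in> ?S \<Longrightarrow> l < L \<Longrightarrow> Bgg m l \<subseteq> J" using BgJ SM by blast
    have c2: "\<And>m. m \<in> ?S \<Longrightarrow> Bv m j \<subseteq> J" using BvJ SM by blast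
    have c3: "\<And>m l. m \<in> ?S \<Longrightarrow> l < L \<Longrightarrow> Bgg m l \<inter> Bv m j = {}" using Bgv kug SM by blast
    have c4: "\<And>m l l'. m \<in> ?S \<Longrightarrow> l < L \<Longrightarrow> l' < L \<Longrightarrow> l \<noteq> l' \<Longrightarrow> Bgg m l \<inter> Bgg m l' = {}" using Bggd by blast
    have c5: "\<And>m l. m \<in> ?S \<Longrightarrow> l < L \<Longrightarrow> Bgg m l \<subseteq> Bm m" using Bggm by blast
    have c6: "\<And>m. m \<in> ?S \<Longrightarrow> Bv m j \<subseteq> Bm m" using Bvm by blast
    have c7: "\<And>m m'. m \<in> ?S \<Longrightarrow> m' \<in> ?S \<Longrightarrow> m \<noteq> m' \<Longrightarrow> Bm m \<inter> Bm m' = {}" using Bmd by blast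
    have c8: "\<And>m l. m \<in> ?S \<Longrightarrow> l < L \<Longrightarrow> FGg m l \<in> borel_measurable (PiM (Bgg m l) (\<lambda>_. borel))" using mGg by blast
    have c9: "\<And>m l x. m \<in> ?S \<Longrightarrow> l < L \<Longrightarrow> FGg m l (restrict x (Bgg m l)) = FGg m l x" using rGg by blast
    have c10: "\<And>m l. m \<in> ?S \<Longrightarrow> l < L \<Longrightarrow> FV m j l \<in> borel_measurable (PiM (Bv m j) (\<lambda>_. borel))" using mV SM by blast
    have c11: "\<And>m l x. m \<in> ?S \<Longrightarrow> l < L \<Longrightarrow> FV m j l (restrict x (Bv m j)) = FV m j l x" using rV by blast
    have c12: "\<And>m l \<omega>. m \<in> ?S \<Longrightarrow> l < L \<Longrightarrow> \<omega> \<in> space \<Omega> \<Longrightarrow> cmod (FV m j l (\<lambda>i. Zf i \<omega>)) \<le> 1"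
      using bV SM by blast
    have c13: "\<And>m l. m \<in> ?S \<Longrightarrow> l < L \<Longrightarrow> integrable \<Omega> (\<lambda>\<omega>. FGg m l (\<lambda>i. Zf i \<omega>))"
      using gmom(2) SM kK by simp
    have c14: "\<And>m l. m \<in> ?S \<Longrightarrow> l < L \<Longrightarrow> (\<integral>\<omega>. FGg m l (\<lambda>i. Zf i \<omega>) \<partial>\<Omega>) = 0"
      using gmom(3) SM kK by simp
    have c15: "\<And>m l. m \<in> ?S \<Longrightarrow> l < L \<Longrightarrow> integrable \<Omega> (\<lambda>\<omega>. (cmod (FGg m l (\<lambda>i. Zf i \<omega>)))\<^sup>2)"
      using gmom(4) SM kK by simp
    have c16: "\<And>m l. m \<in> ?S \<Longrightarrow> l < L \<Longrightarrow> (\<integral>\<omega>. (cmod (FGg m l (\<lambda>i. Zf i \<omega>)))\<^sup>2 \<partial>\<Omega>) = 1"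
      using gmom(5) SM kK by simp
    note C = combo[where L=L and S="?S" and Bg=Bgg and Bv="\<lambda>m. Bv m j" and Bm=Bm and FG=FGg and FV="\<lambda>m. FV m j"
      and \<sigma>="\<lambda>_ _. 1" and c="\<lambda>m. sqrt (p m)" and a=a and J=J and Z=Zf,
      OF indZ fin c1 c2 c3 c4 c5 c6 c7 c8 c9 c10 c11 c12 c13 c14 c15 c16]
    show ?thesis using C by blast
  qed
  define FGd where "FGd m l x = x ((m,k,l),True)" for m l :: nat and x :: "(nat\<times>nat\<times>nat)\<times>bool \<Rightarrow> complex"
  define Bgd where "Bgd m l = {((m,k,l),True)}" for m l :: nat
  have FGd_eq[simp]: "FGd m l (\<lambda>i. Zf i \<omega>) = Dp m k l \<omega>" for m l \<omega> by (simp add: FGd_def)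
  have mGd: "FGd m l \<in> borel_measurable (PiM (Bgd m l) (\<lambda>_. borel))" for m l
    unfolding FGd_def by measurable
  have rGd: "FGd m l (restrict x (Bgd m l)) = FGd m l x" for m l x by (simp add: FGd_def Bgd_def)
  have BgdJ: "Bgd m l \<subseteq> J" if "m < M" "l < L" for m l using that kK by (auto simp: Bgd_def J_def I_def)
  have Bgdm: "Bgd m l \<subseteq> Bm m" for m l by (auto simp: Bgd_def Bm_def)
  have Bgdd: "Bgd m l \<inter> Bgd m l' = {}" if "l \<noteq> l'" for m l l' using that by (auto simp: Bgd_def)
  have Bgdv: "Bgd m l \<inter> Bv m j = {}" for m l j by (auto simp: Bgd_def Bv_def)
  have SGIj: "integrable \<Omega> (\<lambda>\<omega>. (cmod (\<Sum>m\<in>A j \<inter> A k. complex_of_real (sqrt (p m)) *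
            (\<Sum>l<L. complex_of_real (a m l) * cnj (FGd m l (\<lambda>i. Zf i \<omega>)) * FV m j l (\<lambda>i. Zf i \<omega>))))\<^sup>2)
     \<and> (\<integral>\<omega>. (cmod (\<Sum>m\<in>A j \<inter> A k. complex_of_real (sqrt (p m)) *
            (\<Sum>l<L. complex_of_real (a m l) * cnj (FGd m l (\<lambda>i. Zf i \<omega>)) * FV m j l (\<lambda>i. Zf i \<omega>))))\<^sup>2 \<partial>\<Omega>)
       \<le> (\<Sum>m\<in>A j \<inter> A k. (sqrt (p m))\<^sup>2 * (\<Sum>l<L. (a m l)\<^sup>2 * 2 powr (- b m k l)))" if j: "j < K" for j
  proof -
    let ?S = "A j \<inter> A k"
    have fin: "finite ?S" using finA[OF j] by simp
    have SM: "m < M" "j \<in> U m" "m \<in> A k" if "m \<in> ?S" for m using AjM[OF _ j] jU[OF _ j] that by auto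
    have c1: "\<And>m l. m \<in> ?S \<Longrightarrow> l < L \<Longrightarrow> Bgd m l \<subseteq> J" using BgdJ SM by blast
    have c2: "\<And>m. m \<in> ?S \<Longrightarrow> Bv m j \<subseteq> J" using BvJ SM by blast
    have c3: "\<And>m l. m \<in> ?S \<Longrightarrow> l < L \<Longrightarrow> Bgd m l \<inter> Bv m j = {}" using Bgdv by blast
    have c4: "\<And>m l l'. m \<in> ?S \<Longrightarrow> l < L \<Longrightarrow> l' < L \<Longrightarrow> l \<noteq> l' \<Longrightarrow> Bgd m l \<inter> Bgd m l' = {}" using Bgdd by blast
    have c5: "\<And>m l. m \<in> ?S \<Longrightarrow> l < L \<Longrightarrow> Bgd m l \<subseteq> Bm m" using Bgdm by blast
    have c6: "\<And>m. m \<in> ?S \<Longrightarrow> Bv m j \<subseteq> Bm m" using Bvm by blast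
    have c7: "\<And>m m'. m \<in> ?S \<Longrightarrow> m' \<in> ?S \<Longrightarrow> m \<noteq> m' \<Longrightarrow> Bm m \<inter> Bm m' = {}" using Bmd by blast
    have c8: "\<And>m l. m \<in> ?S \<Longrightarrow> l < L \<Longrightarrow> FGd m l \<in> borel_measurable (PiM (Bgd m l) (\<lambda>_. borel))" using mGd by blast
    have c9: "\<And>m l x. m \<in> ?S \<Longrightarrow> l < L \<Longrightarrow> FGd m l (restrict x (Bgd m l)) = FGd m l x" using rGd by blast
    have c10: "\<And>m l. m \<in> ?S \<Longrightarrow> l < L \<Longrightarrow> FV m j l \<in> borel_measurable (PiM (Bv m j) (\<lambda>_. borel))" using mV SM by blast
    have c11: "\<And>m l x. m \<in> ?S \<Longrightarrow> l < L \<Longrightarrow> FV m j l (restrict x (Bv m j)) = FV m j l x" using rV by blast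
    have c12: "\<And>m l \<omega>. m \<in> ?S \<Longrightarrow> l < L \<Longrightarrow> \<omega> \<in> space \<Omega> \<Longrightarrow> cmod (FV m j l (\<lambda>i. Zf i \<omega>)) \<le> 1"
      using bV SM by blast
    have c13: "\<And>m l. m \<in> ?S \<Longrightarrow> l < L \<Longrightarrow> integrable \<Omega> (\<lambda>\<omega>. FGd m l (\<lambda>i. Zf i \<omega>))"
      using dmom(2) SM kK by (simp add: Dp_def)
    have c14: "\<And>m l. m \<in> ?S \<Longrightarrow> l < L \<Longrightarrow> (\<integral>\<omega>. FGd m l (\<lambda>i. Zf i \<omega>) \<partial>\<Omega>) = 0"
      using dmom(3) SM kK by (simp add: Dp_def)
    have c15: "\<And>m l. m \<in> ?S \<Longrightarrow> l < L \<Longrightarrow> integrable \<Omega> (\<lambda>\<omega>. (cmod (FGd m l (\<lambda>i. Zf i \<omega>)))\<^sup>2)"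
      using dmom(4) SM kK by (simp add: Dp_def)
    have c16: "\<And>m l. m \<in> ?S \<Longrightarrow> l < L \<Longrightarrow> (\<integral>\<omega>. (cmod (FGd m l (\<lambda>i. Zf i \<omega>)))\<^sup>2 \<partial>\<Omega>) = 2 powr (- b m k l)"
      using dmom(5) SM kK by (simp add: Dp_def)
    note C = combo[where L=L and S="?S" and Bg=Bgd and Bv="\<lambda>m. Bv m j" and Bm=Bm and FG=FGd and FV="\<lambda>m. FV m j"
      and \<sigma>="\<lambda>m l. 2 powr (- b m k l)" and c="\<lambda>m. sqrt (p m)" and a=a and J=J and Z=Zf,
      OF indZ fin c1 c2 c3 c4 c5 c6 c7 c8 c9 c10 c11 c12 c13 c14 c15 c16]
    show ?thesis using C by blast
  qed
  have sigIGI_eq: "sigIGI K N A p h w k = (\<lambda>\<omega>. \<Sum>j\<in>{..<K} - {k}. (cmod (\<Sum>m\<in>A j - A k. complex_of_real (sqrt (p m)) *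
            (\<Sum>l<L. complex_of_real (a m l) * cnj (FGg m l (\<lambda>i. Zf i \<omega>)) * FV m j l (\<lambda>i. Zf i \<omega>))))\<^sup>2)"
    by (rule ext) (simp add: sigIGI_def hipH)
  have partI: "(\<integral>\<^sup>+\<omega>. ennreal (sigIGI K N A p h w k \<omega>) \<partial>\<Omega>)
           \<le> ennreal (\<Sum>j\<in>{..<K} - {k}. \<Sum>m\<in>A j - A k. p m * \<beta> m k * real N)"
    unfolding sigIGI_eq
  proof (rule nn_le)
    show "integrable \<Omega> (\<lambda>\<omega>. \<Sum>j\<in>{..<K} - {k}. (cmod (\<Sum>m\<in>A j - A k. complex_of_real (sqrt (p m)) *
            (\<Sum>l<L. complex_of_real (a m l) * cnj (FGg m l (\<lambda>i. Zf i \<omega>)) * FV m j l (\<lambda>i. Zf i \<omega>))))\<^sup>2)"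
      using IGIj by (intro Bochner_Integration.integrable_sum) auto
    show "(\<integral>\<omega>. (\<Sum>j\<in>{..<K} - {k}. (cmod (\<Sum>m\<in>A j - A k. complex_of_real (sqrt (p m)) *
            (\<Sum>l<L. complex_of_real (a m l) * cnj (FGg m l (\<lambda>i. Zf i \<omega>)) * FV m j l (\<lambda>i. Zf i \<omega>))))\<^sup>2) \<partial>\<Omega>)
      \<le> (\<Sum>j\<in>{..<K} - {k}. \<Sum>m\<in>A j - A k. p m * \<beta> m k * real N)"
    proof -
      have "(\<integral>\<omega>. (\<Sum>j\<in>{..<K} - {k}. (cmod (\<Sum>m\<in>A j - A k. complex_of_real (sqrt (p m)) *
            (\<Sum>l<L. complex_of_real (a m l) * cnj (FGg m l (\<lambda>i. Zf i \<omega>)) * FV m j l (\<lambda>i. Zf i \<omega>))))\<^sup>2) \<partial>\<Omega>)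
        = (\<Sum>j\<in>{..<K} - {k}. (\<integral>\<omega>. (cmod (\<Sum>m\<in>A j - A k. complex_of_real (sqrt (p m)) *
            (\<Sum>l<L. complex_of_real (a m l) * cnj (FGg m l (\<lambda>i. Zf i \<omega>)) * FV m j l (\<lambda>i. Zf i \<omega>))))\<^sup>2 \<partial>\<Omega>))"
        by (rule Bochner_Integration.integral_sum) (use IGIj in auto)
      also have "\<dots> \<le> (\<Sum>j\<in>{..<K} - {k}. (\<Sum>m\<in>A j - A k. (sqrt (p m))\<^sup>2 * (\<Sum>l<L. (a m l)\<^sup>2 * 1)))"
        by (rule sum_mono) (use IGIj in auto)
      also have "\<dots> = (\<Sum>j\<in>{..<K} - {k}. \<Sum>m\<in>A j - A k. p m * \<beta> m k * real N)"
        by (rule sum.cong[OF refl], rule sumb) (use AM in auto)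
      finally show ?thesis .
    qed
  qed (auto intro!: sum_nonneg)
  have hipS: "hip N (h m k \<omega>) (w m j \<omega>) = (\<Sum>l<L. complex_of_real (a m l) * cnj (FGd m l (\<lambda>i. Zf i \<omega>)) * FV m j l (\<lambda>i. Zf i \<omega>))"
    if "\<omega> \<in> space \<Omega>" "m \<in> A j" "m \<in> A k" "j < K" "j \<noteq> k" for m j \<omega>
  proof -
    have hs: "h m k \<omega> = (\<lambda>n. hq m k \<omega> n + mpchan N L (\<beta> m k) (\<kappa> m k) (\<theta> m k) (\<lambda>l. \<Delta> m k l \<omega>) n)"
      unfolding h_def hq_def by (rule ext, rule mpchan_split)
    have o: "hip N (hq m k \<omega>) (w m j \<omega>) = 0"
      using orth AjM[OF that(2,4)] jU[OF that(2,4)] jU[OF that(3) kK] that by auto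
    show ?thesis unfolding hs hip_add_left o
      using that by (simp add: hip_mpchan a_def Dp_def)
  qed
  have sigSGI_eq: "sigSGI K N A p h w k \<omega> = (\<Sum>j\<in>{..<K} - {k}. (cmod (\<Sum>m\<in>A j \<inter> A k. complex_of_real (sqrt (p m)) *
            (\<Sum>l<L. complex_of_real (a m l) * cnj (FGd m l (\<lambda>i. Zf i \<omega>)) * FV m j l (\<lambda>i. Zf i \<omega>))))\<^sup>2)"
    if "\<omega> \<in> space \<Omega>" for \<omega>
    unfolding sigSGI_def
    by (intro sum.cong refl arg_cong[where f="\<lambda>x. (cmod x)\<^sup>2"] arg_cong2[where f="(*)"]) (use hipS that in auto)
  have sumS: "(\<Sum>m\<in>S. (sqrt (p m))\<^sup>2 * (\<Sum>l<L. (a m l)\<^sup>2 * 2 powr (- b m k l)))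
      = (\<Sum>m\<in>S. p m * \<beta> m k * real N * (\<Sum>l<L. \<kappa> m k l * 2 powr (- b m k l)))"
    if "S \<subseteq> {..<M}" for S
  proof (intro sum.cong refl)
    fix m assume m: "m \<in> S"
    then have mM: "m < M" using that by auto
    have "(\<Sum>l<L. (a m l)\<^sup>2 * 2 powr (- b m k l)) = (\<Sum>l<L. \<beta> m k * real N * (\<kappa> m k l * 2 powr (- b m k l)))"
      using a2 mM by (simp add: mult.assoc)
    also have "\<dots> = \<beta> m k * real N * (\<Sum>l<L. \<kappa> m k l * 2 powr (- b m k l))" by (simp add: sum_distrib_left)
    finally show "(sqrt (p m))\<^sup>2 * (\<Sum>l<L. (a m l)\<^sup>2 * 2 powr (- b m k l))
        = p m * \<beta> m k * real N * (\<Sum>l<L. \<kappa> m k l * 2 powr (- b m k l))"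
      using p0[OF mM] by (simp add: mult.assoc)
  qed
  have partS: "(\<integral>\<^sup>+\<omega>. ennreal (sigSGI K N A p h w k \<omega>) \<partial>\<Omega>)
           \<le> ennreal (\<Sum>j\<in>{..<K} - {k}. \<Sum>m\<in>A j \<inter> A k.
                 p m * \<beta> m k * real N * (\<Sum>l<L. \<kappa> m k l * 2 powr (- b m k l)))"
  proof -
    have "(\<integral>\<^sup>+\<omega>. ennreal (sigSGI K N A p h w k \<omega>) \<partial>\<Omega>) = (\<integral>\<^sup>+\<omega>. ennreal (\<Sum>j\<in>{..<K} - {k}. (cmod (\<Sum>m\<in>A j \<inter> A k. complex_of_real (sqrt (p m)) *
            (\<Sum>l<L. complex_of_real (a m l) * cnj (FGd m l (\<lambda>i. Zf i \<omega>)) * FV m j l (\<lambda>i. Zf i \<omega>))))\<^sup>2) \<partial>\<Omega>)"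
      by (rule nn_integral_cong) (simp add: sigSGI_eq)
    also have "\<dots> \<le> ennreal (\<Sum>j\<in>{..<K} - {k}. \<Sum>m\<in>A j \<inter> A k.
                 p m * \<beta> m k * real N * (\<Sum>l<L. \<kappa> m k l * 2 powr (- b m k l)))"
    proof (rule nn_le)
      show "integrable \<Omega> (\<lambda>\<omega>. \<Sum>j\<in>{..<K} - {k}. (cmod (\<Sum>m\<in>A j \<inter> A k. complex_of_real (sqrt (p m)) *
            (\<Sum>l<L. complex_of_real (a m l) * cnj (FGd m l (\<lambda>i. Zf i \<omega>)) * FV m j l (\<lambda>i. Zf i \<omega>))))\<^sup>2)"
        using SGIj by (intro Bochner_Integration.integrable_sum) auto
      have "(\<integral>\<omega>. (\<Sum>j\<in>{..<K} - {k}. (cmod (\<Sum>m\<in>A j \<inter> A k. complex_of_real (sqrt (p m)) *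
            (\<Sum>l<L. complex_of_real (a m l) * cnj (FGd m l (\<lambda>i. Zf i \<omega>)) * FV m j l (\<lambda>i. Zf i \<omega>))))\<^sup>2) \<partial>\<Omega>)
        = (\<Sum>j\<in>{..<K} - {k}. (\<integral>\<omega>. (cmod (\<Sum>m\<in>A j \<inter> A k. complex_of_real (sqrt (p m)) *
            (\<Sum>l<L. complex_of_real (a m l) * cnj (FGd m l (\<lambda>i. Zf i \<omega>)) * FV m j l (\<lambda>i. Zf i \<omega>))))\<^sup>2 \<partial>\<Omega>))"
        by (rule Bochner_Integration.integral_sum) (use SGIj in auto)
      also have "\<dots> \<le> (\<Sum>j\<in>{..<K} - {k}. (\<Sum>m\<in>A j \<inter> A k. (sqrt (p m))\<^sup>2 * (\<Sum>l<L. (a m l)\<^sup>2 * 2 powr (- b m k l))))"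
        by (rule sum_mono) (use SGIj in auto)
      also have "\<dots> = (\<Sum>j\<in>{..<K} - {k}. \<Sum>m\<in>A j \<inter> A k. p m * \<beta> m k * real N * (\<Sum>l<L. \<kappa> m k l * 2 powr (- b m k l)))"
        by (rule sum.cong[OF refl], rule sumS) (use AM in auto)
      finally show "(\<integral>\<omega>. (\<Sum>j\<in>{..<K} - {k}. (cmod (\<Sum>m\<in>A j \<inter> A k. complex_of_real (sqrt (p m)) *
            (\<Sum>l<L. complex_of_real (a m l) * cnj (FGd m l (\<lambda>i. Zf i \<omega>)) * FV m j l (\<lambda>i. Zf i \<omega>))))\<^sup>2) \<partial>\<Omega>)
        \<le> (\<Sum>j\<in>{..<K} - {k}. \<Sum>m\<in>A j \<inter> A k. p m * \<beta> m k * real N * (\<Sum>l<L. \<kappa> m k l * 2 powr (- b m k l)))" .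
    qed (auto intro!: sum_nonneg)
    finally show ?thesis .
  qed
  show ?thesis using partD partS partI by blast
qed


end
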